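(* Let $H=(H_p,\Delta,\epsilon,S,\pi)_{p\in G}$ be a crossed group-cograded weak Hopf quasigroup over a group $G$. Define its mirror $\widetilde H=(\widetilde H_p,\widetilde\Delta,\widetilde\epsilon,\widetilde S,\widetilde\pi)_{p\in G}$ as follows: (1) as an algebra, $\widetilde H_p=H_{p^{-1}}$ for every $p\in G$; (2) for $p,q\in G$ the comultiplication $\widetilde\Delta_{p,q}:\widetilde H_{pq}=H_{q^{-1}p^{-1}}\to \widetilde H_p\otimes\widetilde H_q=H_{p^{-1}}\otimes H_{q^{-1}}$ is $\widetilde\Delta_{p,q}=(\pi_q\otimes \mathrm{id}_{H_{q^{-1}}})\circ\Delta_{q^{-1}p^{-1}q,\,q^{-1}}$; (3) the counit is $\widetilde\epsilon=\epsilon:\widetilde H_e=H_e\to k$; (4) the antipode is $\widetilde S_p=\pi_p\circ S_{p^{-1}}:\widetilde H_p=H_{p^{-1}}\to H_p=\widetilde H_{p^{-1}}$; (5) the crossing is $\widetilde\pi_p=\pi_p$ (viewed as a map $\widetilde H_q=H_{q^{-1}}\to H_{pq^{-1}p^{-1}}=\widetilde H_{pqp^{-1}}$). Then $\widetilde H$ is again a crossed group-cograded weak Hopf quasigroup over $G$.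
   Context: Let $k$ be a field and $G$ a group with identity $e$. A group-cograded weak Hopf quasigroup $H$ over $G$ consists of a family $(H_p)_{p\in G}$ of unital, not necessarily associative, $k$-algebras with units $1_p$; $k$-linear maps $\Delta_{p,q}:H_{pq}\to H_p\otimes H_q$ ($p,q\in G$), written $\Delta_{p,q}(h)=h_{(1,p)}\otimes h_{(2,q)}$, which are coassociative, $(\Delta_{p,q}\otimes\mathrm{id})\Delta_{pq,r}=(\mathrm{id}\otimes\Delta_{q,r})\Delta_{p,qr}$ (iterated coproducts are written $h_{(1,p)}\otimes h_{(2,q)}\otimes h_{(3,r)}$, etc.); and a linear counit $\epsilon:H_e\to k$ with $(\epsilon\otimes\mathrm{id})\Delta_{e,p}=\mathrm{id}=(\mathrm{id}\otimes\epsilon)\Delta_{p,e}$; such that: (1) each $\Delta_{p,q}$ is multiplicative, and $(\Delta_{p,q}\otimes\mathrm{id})\Delta_{pq,r}(1_{pqr})=(\Delta_{p,q}(1_{pq})\otimes 1_r)(1_p\otimes\Delta_{q,r}(1_{qr}))=(1_p\otimes\Delta_{q,r}(1_{qr}))(\Delta_{p,q}(1_{pq})\otimes 1_r)$ for all $p,q,r$; (2) $\epsilon((gh)l)=\epsilon(g(hl))=\epsilon(gh_{(2,e)})\epsilon(h_{(1,e)}l)=\epsilon(gh_{(1,e)})\epsilon(h_{(2,e)}l)$ for $g,h,l\in H_e$; (3) writing $\Delta_{p,q}(1_{pq})=1_{(1,p)}\otimes 1_{(2,q)}$ and defining $\epsilon^t_p,\epsilon^s_p:H_e\to H_p$ by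 $\epsilon^t_p(h)=\epsilon(1_{(1,e)}h)1_{(2,p)}$ and $\epsilon^s_p(h)=1_{(1,p)}\epsilon(h1_{(2,e)})$, there is a family of linear maps $S_p:H_p\to H_{p^{-1}}$ (the antipode) with $S_p(h)=S_p(h_{(1,p)})\epsilon^t_{p^{-1}}(h_{(2,e)})=\epsilon^s_{p^{-1}}(h_{(1,e)})S_p(h_{(2,p)})$ for $h\in H_p$, and for all $h\in H_e$, $g\in H_p$: $S_{p^{-1}}(h_{(1,p^{-1})})(h_{(2,p)}g)=\epsilon^s_p(h)g$, $h_{(1,p)}(S_{p^{-1}}(h_{(2,p^{-1})})g)=\epsilon^t_p(h)g$, $(gh_{(1,p)})S_{p^{-1}}(h_{(2,p^{-1})})=g\epsilon^t_p(h)$, $(gS_{p^{-1}}(h_{(1,p^{-1})}))h_{(2,p)}=g\epsilon^s_p(h)$. It is crossed if it is equipped with a family of algebra isomorphisms $\pi_p:H_q\to H_{pqp^{-1}}$ ($p,q\in G$), the crossing, such that $(\pi_p\otimes\pi_p)\Delta_{q,r}=\Delta_{pqp^{-1},prp^{-1}}\pi_p$, $\epsilon\pi_p=\epsilon$ and $\pi_{pq}=\pi_p\pi_q$ for all $p,q,r\in G$. *)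

theory Defs
  imports Main "HOL.Vector_Spaces"
begin

text \<open>
  The group G is a type of class group_add (written additively: p + q is the
  product pq, - p the inverse, 0 the identity e).  All the algebras H_p live as k-subspaces H p of one ambient
  k-vector space (type 'h with scalar multiplication scale); each carries its own
  multiplication mu p and unit one p.  An element of H_p (x) H_q is represented
  by a finite list of pairs [(a_1,b_1),...,(a_n,b_n)] standing for the sum of the
  a_i (x) b_i.  Two such representatives denote the same tensor iff they agree under
  every bilinear form on H_p x H_q (over a field these separate tensors);
  likewise for triple tensors and trilinear forms.
\<close>

definition lin_on :: "('k::field \<Rightarrow> 'h::ab_group_add \<Rightarrow> 'h) \<Rightarrow> 'h set \<Rightarrow> ('h \<Rightarrow> 'h) \<Rightarrow> bool" where
  "lin_on scale A f \<longleftrightarrow>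
     (\<forall>x\<in>A. \<forall>y\<in>A. f (x + y) = f x + f y) \<and> (\<forall>c. \<forall>x\<in>A. f (scale c x) = scale c (f x))"

definition linform_on :: "('k::field \<Rightarrow> 'h::ab_group_add \<Rightarrow> 'h) \<Rightarrow> 'h set \<Rightarrow> ('h \<Rightarrow> 'k) \<Rightarrow> bool" where
  "linform_on scale A f \<longleftrightarrow>
     (\<forall>x\<in>A. \<forall>y\<in>A. f (x + y) = f x + f y) \<and> (\<forall>c. \<forall>x\<in>A. f (scale c x) = c * f x)"

definition bilin_on :: "('k::field \<Rightarrow> 'h::ab_group_add \<Rightarrow> 'h) \<Rightarrow> 'h set \<Rightarrow> 'h set \<Rightarrow> ('h \<Rightarrow> 'h \<Rightarrow> 'k) \<Rightarrow> bool" where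
  "bilin_on scale A B \<phi> \<longleftrightarrow>
     (\<forall>b\<in>B. linform_on scale A (\<lambda>a. \<phi> a b)) \<and> (\<forall>a\<in>A. linform_on scale B (\<lambda>b. \<phi> a b))"

definition trilin_on :: "('k::field \<Rightarrow> 'h::ab_group_add \<Rightarrow> 'h) \<Rightarrow> 'h set \<Rightarrow> 'h set \<Rightarrow> 'h set \<Rightarrow> ('h \<Rightarrow> 'h \<Rightarrow> 'h \<Rightarrow> 'k) \<Rightarrow> bool" where
  "trilin_on scale A B C \<phi> \<longleftrightarrow>
     (\<forall>b\<in>B. \<forall>c\<in>C. linform_on scale A (\<lambda>a. \<phi> a b c)) \<and>
     (\<forall>a\<in>A. \<forall>c\<in>C. linform_on scale B (\<lambda>b. \<phi> a b c)) \<and>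
     (\<forall>a\<in>A. \<forall>b\<in>B. linform_on scale C (\<lambda>c. \<phi> a b c))"

definition teq2 :: "('k::field \<Rightarrow> 'h::ab_group_add \<Rightarrow> 'h) \<Rightarrow> 'h set \<Rightarrow> 'h set \<Rightarrow> ('h \<times> 'h) list \<Rightarrow> ('h \<times> 'h) list \<Rightarrow> bool" where
  "teq2 scale A B xs ys \<longleftrightarrow> set xs \<subseteq> A \<times> B \<and> set ys \<subseteq> A \<times> B \<and>
     (\<forall>\<phi>. bilin_on scale A B \<phi> \<longrightarrow>
        sum_list (map (\<lambda>(a,b). \<phi> a b) xs) = sum_list (map (\<lambda>(a,b). \<phi> a b) ys))"

definition teq3 :: "('k::field \<Rightarrow> 'h::ab_group_add \<Rightarrow> 'h) \<Rightarrow> 'h set \<Rightarrow> 'h set \<Rightarrow> 'h set \<Rightarrow> ('h \<times> 'h \<times> 'h) list \<Rightarrow> ('h \<times> 'h \<times> 'h) list \<Rightarrow> bool" where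
  "teq3 scale A B C xs ys \<longleftrightarrow> set xs \<subseteq> A \<times> B \<times> C \<and> set ys \<subseteq> A \<times> B \<times> C \<and>
     (\<forall>\<phi>. trilin_on scale A B C \<phi> \<longrightarrow>
        sum_list (map (\<lambda>(a,b,c). \<phi> a b c) xs) = sum_list (map (\<lambda>(a,b,c). \<phi> a b c) ys))"

text \<open>(Delta1 (x) id) applied to a representative of an element of X (x) C.\<close>
definition comult_left :: "('h \<Rightarrow> ('h \<times> 'h) list) \<Rightarrow> ('h \<times> 'h) list \<Rightarrow> ('h \<times> 'h \<times> 'h) list" where
  "comult_left D xs = concat (map (\<lambda>(x,c). map (\<lambda>(a,b). (a,b,c)) (D x)) xs)"

text \<open>(id (x) Delta2) applied to a representative of an element of A (x) Y.\<close>
definition comult_right :: "('h \<Rightarrow> ('h \<times> 'h) list) \<Rightarrow> ('h \<times> 'h) list \<Rightarrow> ('h \<times> 'h \<times> 'h) list" where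
  "comult_right D xs = concat (map (\<lambda>(a,y). map (\<lambda>(b,c). (a,b,c)) (D y)) xs)"

definition tmult2 :: "('h \<Rightarrow> 'h \<Rightarrow> 'h) \<Rightarrow> ('h \<Rightarrow> 'h \<Rightarrow> 'h) \<Rightarrow> ('h \<times> 'h) list \<Rightarrow> ('h \<times> 'h) list \<Rightarrow> ('h \<times> 'h) list" where
  "tmult2 m1 m2 xs ys = concat (map (\<lambda>(a,b). map (\<lambda>(a',b'). (m1 a a', m2 b b')) ys) xs)"

definition tmult3 :: "('h \<Rightarrow> 'h \<Rightarrow> 'h) \<Rightarrow> ('h \<Rightarrow> 'h \<Rightarrow> 'h) \<Rightarrow> ('h \<Rightarrow> 'h \<Rightarrow> 'h) \<Rightarrow>
    ('h \<times> 'h \<times> 'h) list \<Rightarrow> ('h \<times> 'h \<times> 'h) list \<Rightarrow> ('h \<times> 'h \<times> 'h) list" where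
  "tmult3 m1 m2 m3 xs ys =
     concat (map (\<lambda>(a,b,c). map (\<lambda>(a',b',c'). (m1 a a', m2 b b', m3 c c')) ys) xs)"

text \<open>Family of unital, not necessarily associative, k-algebras (H_p, mu p, one p).\<close>
definition algebra_family ::
  "('k::field \<Rightarrow> 'h::ab_group_add \<Rightarrow> 'h) \<Rightarrow> ('g \<Rightarrow> 'h set) \<Rightarrow> ('g \<Rightarrow> 'h \<Rightarrow> 'h \<Rightarrow> 'h) \<Rightarrow> ('g \<Rightarrow> 'h) \<Rightarrow> bool" where
  "algebra_family scale H mu one \<longleftrightarrow>
     vector_space scale \<and>
     (\<forall>p. module.subspace scale (H p) \<and>
          (\<forall>x\<in>H p. \<forall>y\<in>H p. mu p x y \<in> H p) \<and>
          (\<forall>x\<in>H p. lin_on scale (H p) (\<lambda>y. mu p x y) \<and> lin_on scale (H p) (\<lambda>y. mu p y x)) \<and>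
          one p \<in> H p \<and>
          (\<forall>x\<in>H p. mu p (one p) x = x \<and> mu p x (one p) = x))"

definition epst :: "('k \<Rightarrow> 'h \<Rightarrow> 'h) \<Rightarrow> ('g::group_add \<Rightarrow> 'h \<Rightarrow> 'h \<Rightarrow> 'h) \<Rightarrow> ('g \<Rightarrow> 'h) \<Rightarrow>
    ('g \<Rightarrow> 'g \<Rightarrow> 'h \<Rightarrow> ('h \<times> 'h) list) \<Rightarrow> ('h \<Rightarrow> 'k) \<Rightarrow> 'g \<Rightarrow> 'h \<Rightarrow> 'h::monoid_add" where
  "epst scale mu one Delta eps p h =
     sum_list (map (\<lambda>(a,b). scale (eps (mu 0 a h)) b) (Delta 0 p (one p)))"

definition epss :: "('k \<Rightarrow> 'h \<Rightarrow> 'h) \<Rightarrow> ('g::group_add \<Rightarrow> 'h \<Rightarrow> 'h \<Rightarrow> 'h) \<Rightarrow> ('g \<Rightarrow> 'h) \<Rightarrow>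
    ('g \<Rightarrow> 'g \<Rightarrow> 'h \<Rightarrow> ('h \<times> 'h) list) \<Rightarrow> ('h \<Rightarrow> 'k) \<Rightarrow> 'g \<Rightarrow> 'h \<Rightarrow> 'h::monoid_add" where
  "epss scale mu one Delta eps p h =
     sum_list (map (\<lambda>(a,b). scale (eps (mu 0 h b)) a) (Delta p 0 (one p)))"

definition gc_whq ::
  "('k::field \<Rightarrow> 'h::ab_group_add \<Rightarrow> 'h) \<Rightarrow> ('g::group_add \<Rightarrow> 'h set) \<Rightarrow> ('g \<Rightarrow> 'h \<Rightarrow> 'h \<Rightarrow> 'h) \<Rightarrow> ('g \<Rightarrow> 'h) \<Rightarrow>
   ('g \<Rightarrow> 'g \<Rightarrow> 'h \<Rightarrow> ('h \<times> 'h) list) \<Rightarrow> ('h \<Rightarrow> 'k) \<Rightarrow> ('g \<Rightarrow> 'h \<Rightarrow> 'h) \<Rightarrow> bool" where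
  "gc_whq scale H mu one Delta eps S \<longleftrightarrow>
     algebra_family scale H mu one \<and>
     \<comment> \<open>Delta p q : H_(pq) \<rightarrow> H_p (x) H_q, k-linear\<close>
     (\<forall>p q. \<forall>h\<in>H (p + q). set (Delta p q h) \<subseteq> H p \<times> H q) \<and>
     (\<forall>p q. \<forall>x\<in>H (p + q). \<forall>y\<in>H (p + q).
        teq2 scale (H p) (H q) (Delta p q (x + y)) (Delta p q x @ Delta p q y)) \<and>
     (\<forall>p q c. \<forall>x\<in>H (p + q).
        teq2 scale (H p) (H q) (Delta p q (scale c x)) (map (\<lambda>(a,b). (scale c a, b)) (Delta p q x))) \<and>
     \<comment> \<open>coassociativity\<close>
     (\<forall>p q r. \<forall>h\<in>H (p + q + r).
        teq3 scale (H p) (H q) (H r) (comult_left (Delta p q) (Delta (p + q) r h))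
                                     (comult_right (Delta q r) (Delta p (q + r) h))) \<and>
     \<comment> \<open>counit\<close>
     linform_on scale (H 0) eps \<and>
     (\<forall>p. \<forall>h\<in>H p. sum_list (map (\<lambda>(a,b). scale (eps a) b) (Delta 0 p h)) = h \<and>
                  sum_list (map (\<lambda>(a,b). scale (eps b) a) (Delta p 0 h)) = h) \<and>
     \<comment> \<open>(1) multiplicativity and the unit axiom\<close>
     (\<forall>p q. \<forall>g\<in>H (p + q). \<forall>h\<in>H (p + q).
        teq2 scale (H p) (H q) (Delta p q (mu (p + q) g h))
                               (tmult2 (mu p) (mu q) (Delta p q g) (Delta p q h))) \<and>
     (\<forall>p q r.
        teq3 scale (H p) (H q) (H r) (comult_left (Delta p q) (Delta (p + q) r (one (p + q + r))))
          (tmult3 (mu p) (mu q) (mu r)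
             (map (\<lambda>(a,b). (a,b,one r)) (Delta p q (one (p + q))))
             (map (\<lambda>(b,c). (one p,b,c)) (Delta q r (one (q + r))))) \<and>
        teq3 scale (H p) (H q) (H r) (comult_left (Delta p q) (Delta (p + q) r (one (p + q + r))))
          (tmult3 (mu p) (mu q) (mu r)
             (map (\<lambda>(b,c). (one p,b,c)) (Delta q r (one (q + r))))
             (map (\<lambda>(a,b). (a,b,one r)) (Delta p q (one (p + q)))))) \<and>
     \<comment> \<open>(2) weak multiplicativity of the counit\<close>
     (\<forall>g\<in>H 0. \<forall>h\<in>H 0. \<forall>l\<in>H 0.
        eps (mu 0 (mu 0 g h) l) = eps (mu 0 g (mu 0 h l)) \<and>
        eps (mu 0 g (mu 0 h l)) = sum_list (map (\<lambda>(a,b). eps (mu 0 g b) * eps (mu 0 a l)) (Delta 0 0 h)) \<and>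
        eps (mu 0 g (mu 0 h l)) = sum_list (map (\<lambda>(a,b). eps (mu 0 g a) * eps (mu 0 b l)) (Delta 0 0 h))) \<and>
     \<comment> \<open>(3) the antipode S p : H_p \<rightarrow> H_(p^-1), k-linear\<close>
     (\<forall>p. (\<forall>h\<in>H p. S p h \<in> H (- p)) \<and> lin_on scale (H p) (S p)) \<and>
     (\<forall>p. \<forall>h\<in>H p.
        S p h = sum_list (map (\<lambda>(a,b). mu (- p) (S p a) (epst scale mu one Delta eps (- p) b)) (Delta p 0 h)) \<and>
        S p h = sum_list (map (\<lambda>(a,b). mu (- p) (epss scale mu one Delta eps (- p) a) (S p b)) (Delta 0 p h))) \<and>
     (\<forall>p. \<forall>h\<in>H 0. \<forall>g\<in>H p.
        sum_list (map (\<lambda>(a,b). mu p (S (- p) a) (mu p b g)) (Delta (- p) p h))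
          = mu p (epss scale mu one Delta eps p h) g \<and>
        sum_list (map (\<lambda>(a,b). mu p a (mu p (S (- p) b) g)) (Delta p (- p) h))
          = mu p (epst scale mu one Delta eps p h) g \<and>
        sum_list (map (\<lambda>(a,b). mu p (mu p g a) (S (- p) b)) (Delta p (- p) h))
          = mu p g (epst scale mu one Delta eps p h) \<and>
        sum_list (map (\<lambda>(a,b). mu p (mu p g (S (- p) a)) b) (Delta (- p) p h))
          = mu p g (epss scale mu one Delta eps p h))"

definition crossed_gc_whq ::
  "('k::field \<Rightarrow> 'h::ab_group_add \<Rightarrow> 'h) \<Rightarrow> ('g::group_add \<Rightarrow> 'h set) \<Rightarrow> ('g \<Rightarrow> 'h \<Rightarrow> 'h \<Rightarrow> 'h) \<Rightarrow> ('g \<Rightarrow> 'h) \<Rightarrow>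
   ('g \<Rightarrow> 'g \<Rightarrow> 'h \<Rightarrow> ('h \<times> 'h) list) \<Rightarrow> ('h \<Rightarrow> 'k) \<Rightarrow> ('g \<Rightarrow> 'h \<Rightarrow> 'h) \<Rightarrow>
   ('g \<Rightarrow> 'g \<Rightarrow> 'h \<Rightarrow> 'h) \<Rightarrow> bool" where
  "crossed_gc_whq scale H mu one Delta eps S pi \<longleftrightarrow>
     gc_whq scale H mu one Delta eps S \<and>
     (\<forall>p q. bij_betw (pi p q) (H q) (H (p + q - p)) \<and>
            lin_on scale (H q) (pi p q) \<and>
            (\<forall>x\<in>H q. \<forall>y\<in>H q. pi p q (mu q x y) = mu (p + q - p) (pi p q x) (pi p q y)) \<and>
            pi p q (one q) = one (p + q - p)) \<and>
     (\<forall>p q r. \<forall>h\<in>H (q + r).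
        teq2 scale (H (p + q - p)) (H (p + r - p))
          (map (\<lambda>(a,b). (pi p q a, pi p r b)) (Delta q r h))
          (Delta (p + q - p) (p + r - p) (pi p (q + r) h))) \<and>
     (\<forall>p. \<forall>h\<in>H 0. eps (pi p 0 h) = eps h) \<and>
     (\<forall>p q r. \<forall>h\<in>H r. pi (p + q) r h = pi p (q + r - q) (pi q r h))"

definition mirror_H :: "('g::group_add \<Rightarrow> 'h set) \<Rightarrow> 'g \<Rightarrow> 'h set" where
  "mirror_H H p = H (- p)"

definition mirror_mu :: "('g::group_add \<Rightarrow> 'h \<Rightarrow> 'h \<Rightarrow> 'h) \<Rightarrow> 'g \<Rightarrow> 'h \<Rightarrow> 'h \<Rightarrow> 'h" where
  "mirror_mu mu p = mu (- p)"

definition mirror_one :: "('g::group_add \<Rightarrow> 'h) \<Rightarrow> 'g \<Rightarrow> 'h" where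
  "mirror_one one p = one (- p)"

definition mirror_Delta :: "('g::group_add \<Rightarrow> 'g \<Rightarrow> 'h \<Rightarrow> 'h) \<Rightarrow> ('g \<Rightarrow> 'g \<Rightarrow> 'h \<Rightarrow> ('h \<times> 'h) list) \<Rightarrow>
    'g \<Rightarrow> 'g \<Rightarrow> 'h \<Rightarrow> ('h \<times> 'h) list" where
  "mirror_Delta pi Delta p q h =
     map (\<lambda>(a,b). (pi q (- q + - p + q) a, b)) (Delta (- q + - p + q) (- q) h)"

definition mirror_S :: "('g::group_add \<Rightarrow> 'g \<Rightarrow> 'h \<Rightarrow> 'h) \<Rightarrow> ('g \<Rightarrow> 'h \<Rightarrow> 'h) \<Rightarrow> 'g \<Rightarrow> 'h \<Rightarrow> 'h" where
  "mirror_S pi S p h = pi p p (S (- p) h)"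

definition mirror_pi :: "('g::group_add \<Rightarrow> 'g \<Rightarrow> 'h \<Rightarrow> 'h) \<Rightarrow> 'g \<Rightarrow> 'g \<Rightarrow> 'h \<Rightarrow> 'h" where
  "mirror_pi pi p q = pi p (- q)"

end

theory Submission
  imports Defs
begin


lemma vs_field: "vector_space ((*) :: 'k::field \<Rightarrow> 'k \<Rightarrow> 'k)"
  by unfold_locales (simp_all add: algebra_simps)

lemma separate:
  assumes vs: "vector_space sc" and v: "v \<noteq> 0"
  shows "\<exists>l. (\<forall>x y. l (x + y) = l x + l y) \<and> (\<forall>c x. l (sc c x) = (c::'k::field) * l x) \<and> l v = 1"
proof -
  interpret vector_space_pair sc "(*) :: 'k \<Rightarrow> 'k \<Rightarrow> 'k"
    using vs vs_field by (simp add: vector_space_pair_def)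
  have "vs1.independent {v}"
    using v by (intro vs1.independent_insertI) (auto simp: vs1.independent_empty)
  from linear_independent_extend[OF this, of "\<lambda>_. 1"] obtain g where
    g: "Vector_Spaces.linear sc (*) g" "g v = 1" by auto
  then have "module_hom sc (*) g" by (simp add: module_hom_iff_linear)
  then show ?thesis using g(2)
    by (intro exI[of _ g]) (auto simp: module_hom.add module_hom.scale)
qed

lemma additive_sum_list:
  fixes l :: "'a::ab_group_add \<Rightarrow> 'b::ab_group_add"
  assumes "\<forall>x y. l (x + y) = l x + l y"
  shows "l (sum_list (map f xs)) = sum_list (map (\<lambda>x. l (f x)) xs)"
proof -
  have z: "l 0 = 0" using assms by (metis add_cancel_right_right add_0)
  show ?thesis by (induction xs) (auto simp: z assms)
qed

lemma additive_diff:
  fixes l :: "'a::ab_group_add \<Rightarrow> 'b::ab_group_add"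
  assumes "\<forall>x y. l (x + y) = l x + l y"
  shows "l (x - y) = l x - l y"
  using assms by (metis add_diff_cancel eq_diff_eq)

definition blinv :: "('k::field \<Rightarrow> 'h::ab_group_add \<Rightarrow> 'h) \<Rightarrow> 'h set \<Rightarrow> 'h set \<Rightarrow> ('h \<Rightarrow> 'h \<Rightarrow> 'h) \<Rightarrow> bool" where
  "blinv sc A B F \<longleftrightarrow> (\<forall>b\<in>B. lin_on sc A (\<lambda>a. F a b)) \<and> (\<forall>a\<in>A. lin_on sc B (\<lambda>b. F a b))"

definition trilinv :: "('k::field \<Rightarrow> 'h::ab_group_add \<Rightarrow> 'h) \<Rightarrow> 'h set \<Rightarrow> 'h set \<Rightarrow> 'h set \<Rightarrow> ('h \<Rightarrow> 'h \<Rightarrow> 'h \<Rightarrow> 'h) \<Rightarrow> bool" where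
  "trilinv sc A B C F \<longleftrightarrow> (\<forall>b\<in>B. \<forall>c\<in>C. lin_on sc A (\<lambda>a. F a b c)) \<and>
     (\<forall>a\<in>A. \<forall>c\<in>C. lin_on sc B (\<lambda>b. F a b c)) \<and> (\<forall>a\<in>A. \<forall>b\<in>B. lin_on sc C (\<lambda>c. F a b c))"

lemma lin_linform_comp:
  assumes "lin_on sc A f" and "\<forall>x y. l (x + y) = l x + l y" and "\<forall>c x. l (sc c x) = c * l x"
  shows "linform_on sc A (\<lambda>x. l (f x))"
  using assms unfolding lin_on_def linform_on_def by auto

lemma teq2_vec:
  assumes vs: "vector_space sc" and t: "teq2 sc A B xs ys" and F: "blinv sc A B F"
  shows "sum_list (map (\<lambda>(a,b). F a b) xs) = sum_list (map (\<lambda>(a,b). F a b) ys)"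
proof (rule ccontr)
  let ?L = "sum_list (map (\<lambda>(a,b). F a b) xs)" and ?R = "sum_list (map (\<lambda>(a,b). F a b) ys)"
  assume "?L \<noteq> ?R"
  then have "?L - ?R \<noteq> 0" by simp
  from separate[OF vs this] obtain l where l: "\<forall>x y. l (x + y) = l x + l y"
    "\<forall>c x. l (sc c x) = c * l x" "l (?L - ?R) = 1" by blast
  have bl: "bilin_on sc A B (\<lambda>a b. l (F a b))"
    using F l unfolding blinv_def bilin_on_def by (auto intro: lin_linform_comp)
  have "l ?L = sum_list (map (\<lambda>x. l ((\<lambda>(a,b). F a b) x)) xs)"
    by (rule additive_sum_list[OF l(1)])
  also have "\<dots> = sum_list (map (\<lambda>(a,b). l (F a b)) xs)"
    by (simp add: split_def)
  also have "\<dots> = sum_list (map (\<lambda>(a,b). l (F a b)) ys)"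
    using t bl unfolding teq2_def by blast
  also have "\<dots> = sum_list (map (\<lambda>x. l ((\<lambda>(a,b). F a b) x)) ys)"
    by (simp add: split_def)
  also have "\<dots> = l ?R"
    by (rule additive_sum_list[OF l(1), symmetric])
  finally have "l (?L - ?R) = 0" using additive_diff[OF l(1)] by simp
  with l(3) show False by simp
qed

lemma teq3_vec:
  assumes vs: "vector_space sc" and t: "teq3 sc A B C xs ys" and F: "trilinv sc A B C F"
  shows "sum_list (map (\<lambda>(a,b,c). F a b c) xs) = sum_list (map (\<lambda>(a,b,c). F a b c) ys)"
proof (rule ccontr)
  let ?L = "sum_list (map (\<lambda>(a,b,c). F a b c) xs)" and ?R = "sum_list (map (\<lambda>(a,b,c). F a b c) ys)"
  assume "?L \<noteq> ?R"
  then have "?L - ?R \<noteq> 0" by simp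
  from separate[OF vs this] obtain l where l: "\<forall>x y. l (x + y) = l x + l y"
    "\<forall>c x. l (sc c x) = c * l x" "l (?L - ?R) = 1" by blast
  have bl: "trilin_on sc A B C (\<lambda>a b c. l (F a b c))"
    using F l unfolding trilinv_def trilin_on_def by (auto intro: lin_linform_comp)
  have "l ?L = sum_list (map (\<lambda>x. l ((\<lambda>(a,b,c). F a b c) x)) xs)"
    by (rule additive_sum_list[OF l(1)])
  also have "\<dots> = sum_list (map (\<lambda>(a,b,c). l (F a b c)) xs)"
    by (simp add: split_def)
  also have "\<dots> = sum_list (map (\<lambda>(a,b,c). l (F a b c)) ys)"
    using t bl unfolding teq3_def by blast
  also have "\<dots> = sum_list (map (\<lambda>x. l ((\<lambda>(a,b,c). F a b c) x)) ys)"
    by (simp add: split_def)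
  also have "\<dots> = l ?R"
    by (rule additive_sum_list[OF l(1), symmetric])
  finally have "l (?L - ?R) = 0" using additive_diff[OF l(1)] by simp
  with l(3) show False by simp
qed

lemma linform_comp:
  assumes "linform_on sc A' \<phi>" "lin_on sc A f" "\<forall>x\<in>A. f x \<in> A'"
  shows "linform_on sc A (\<lambda>x. \<phi> (f x))"
  using assms unfolding linform_on_def lin_on_def by auto

lemma teq2_map:
  assumes t: "teq2 sc A B xs ys" and f: "lin_on sc A f" "\<forall>x\<in>A. f x \<in> A'"
    and g: "lin_on sc B g" "\<forall>x\<in>B. g x \<in> B'"
  shows "teq2 sc A' B' (map (\<lambda>(a,b). (f a, g b)) xs) (map (\<lambda>(a,b). (f a, g b)) ys)"
  unfolding teq2_def
proof (intro conjI allI impI)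
  show "set (map (\<lambda>(a,b). (f a, g b)) xs) \<subseteq> A' \<times> B'" "set (map (\<lambda>(a,b). (f a, g b)) ys) \<subseteq> A' \<times> B'"
    using t f g unfolding teq2_def by auto
  fix \<phi> assume \<phi>: "bilin_on sc A' B' \<phi>"
  have "bilin_on sc A B (\<lambda>a b. \<phi> (f a) (g b))"
    using \<phi> f g unfolding bilin_on_def
    by (auto intro!: linform_comp[where f=f and A'=A'] linform_comp[where f=g and A'=B'])
  then have "sum_list (map (\<lambda>(a,b). \<phi> (f a) (g b)) xs) = sum_list (map (\<lambda>(a,b). \<phi> (f a) (g b)) ys)"
    using t unfolding teq2_def by blast
  then show "sum_list (map (\<lambda>(a,b). \<phi> a b) (map (\<lambda>(a,b). (f a, g b)) xs)) =
             sum_list (map (\<lambda>(a,b). \<phi> a b) (map (\<lambda>(a,b). (f a, g b)) ys))"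
    by (simp add: comp_def split_def)
qed

lemma teq3_map:
  assumes t: "teq3 sc A B C xs ys" and f: "lin_on sc A f" "\<forall>x\<in>A. f x \<in> A'"
    and g: "lin_on sc B g" "\<forall>x\<in>B. g x \<in> B'"
    and h: "lin_on sc C h" "\<forall>x\<in>C. h x \<in> C'"
  shows "teq3 sc A' B' C' (map (\<lambda>(a,b,c). (f a, g b, h c)) xs) (map (\<lambda>(a,b,c). (f a, g b, h c)) ys)"
  unfolding teq3_def
proof (intro conjI allI impI)
  show "set (map (\<lambda>(a,b,c). (f a, g b, h c)) xs) \<subseteq> A' \<times> B' \<times> C'"
       "set (map (\<lambda>(a,b,c). (f a, g b, h c)) ys) \<subseteq> A' \<times> B' \<times> C'"
    using t f g h unfolding teq3_def by auto
  fix \<phi> assume \<phi>: "trilin_on sc A' B' C' \<phi>"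
  have "trilin_on sc A B C (\<lambda>a b c. \<phi> (f a) (g b) (h c))"
    using \<phi> f g h unfolding trilin_on_def
    by (auto intro!: linform_comp[where f=f and A'=A'] linform_comp[where f=g and A'=B']
        linform_comp[where f=h and A'=C'])
  then have "sum_list (map (\<lambda>(a,b,c). \<phi> (f a) (g b) (h c)) xs) = sum_list (map (\<lambda>(a,b,c). \<phi> (f a) (g b) (h c)) ys)"
    using t unfolding teq3_def by blast
  then show "sum_list (map (\<lambda>(a,b,c). \<phi> a b c) (map (\<lambda>(a,b,c). (f a, g b, h c)) xs)) =
             sum_list (map (\<lambda>(a,b,c). \<phi> a b c) (map (\<lambda>(a,b,c). (f a, g b, h c)) ys))"
    by (simp add: comp_def split_def)
qed

lemma teq2_refl: "set xs \<subseteq> A \<times> B \<Longrightarrow> teq2 sc A B xs xs"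
  unfolding teq2_def by auto
lemma teq2_sym: "teq2 sc A B xs ys \<Longrightarrow> teq2 sc A B ys xs"
  unfolding teq2_def by auto
lemma teq2_trans: "teq2 sc A B xs ys \<Longrightarrow> teq2 sc A B ys zs \<Longrightarrow> teq2 sc A B xs zs"
  unfolding teq2_def by auto
lemma teq3_refl: "set xs \<subseteq> A \<times> B \<times> C \<Longrightarrow> teq3 sc A B C xs xs"
  unfolding teq3_def by auto
lemma teq3_sym: "teq3 sc A B C xs ys \<Longrightarrow> teq3 sc A B C ys xs"
  unfolding teq3_def by auto
lemma teq3_trans: "teq3 sc A B C xs ys \<Longrightarrow> teq3 sc A B C ys zs \<Longrightarrow> teq3 sc A B C xs zs"
  unfolding teq3_def by auto

lemma teq3_append: "teq3 sc A B C xs ys \<Longrightarrow> teq3 sc A B C xs' ys' \<Longrightarrow> teq3 sc A B C (xs @ xs') (ys @ ys')"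
  unfolding teq3_def by auto

lemma teq3_Nil: "teq3 sc A B C [] []"
  unfolding teq3_def by auto

lemma teq_2to3:
  assumes "teq2 sc A B xs ys" "c \<in> C"
  shows "teq3 sc A B C (map (\<lambda>(a,b). (a,b,c)) xs) (map (\<lambda>(a,b). (a,b,c)) ys)"
  unfolding teq3_def
proof (intro conjI allI impI)
  show "set (map (\<lambda>(a,b). (a,b,c)) xs) \<subseteq> A \<times> B \<times> C" "set (map (\<lambda>(a,b). (a,b,c)) ys) \<subseteq> A \<times> B \<times> C"
    using assms unfolding teq2_def by auto
  fix \<phi> assume "trilin_on sc A B C \<phi>"
  then have "bilin_on sc A B (\<lambda>a b. \<phi> a b c)" using assms(2) unfolding trilin_on_def bilin_on_def by auto
  then have "sum_list (map (\<lambda>(a,b). \<phi> a b c) xs) = sum_list (map (\<lambda>(a,b). \<phi> a b c) ys)"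
    using assms(1) unfolding teq2_def by blast
  then show "sum_list (map (\<lambda>(a,b,c). \<phi> a b c) (map (\<lambda>(a,b). (a,b,c)) xs)) =
             sum_list (map (\<lambda>(a,b,c). \<phi> a b c) (map (\<lambda>(a,b). (a,b,c)) ys))"
    by (simp add: comp_def split_def)
qed

lemma comult_left_Cons: "comult_left D (x # L) = map (\<lambda>(a,b). (a,b,snd x)) (D (fst x)) @ comult_left D L"
  by (simp add: comult_left_def split_def)
lemma comult_left_Nil: "comult_left D [] = []"
  by (simp add: comult_left_def)

lemma comult_left_cong:
  assumes "set L \<subseteq> X \<times> C" "\<And>x. x \<in> X \<Longrightarrow> teq2 sc A B (D x) (D' x)"
  shows "teq3 sc A B C (comult_left D L) (comult_left D' L)"
  using assms(1)
proof (induction L)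
  case Nil then show ?case by (simp add: comult_left_Nil teq3_Nil)
next
  case (Cons x L)
  then show ?case unfolding comult_left_Cons
    by (intro teq3_append teq_2to3 assms(2)) auto
qed

lemma comult_left_map_in:
  "comult_left D (map (\<lambda>(x,c). (f x, c)) L) = comult_left (\<lambda>x. D (f x)) L"
  by (induction L) (auto simp: comult_left_Cons comult_left_Nil)

lemma comult_left_map_out:
  "comult_left (\<lambda>x. map (\<lambda>(a,b). (f a, g b)) (D x)) L = map (\<lambda>(a,b,c). (f a, g b, c)) (comult_left D L)"
  by (induction L) (auto simp: comult_left_Cons comult_left_Nil comp_def split_def)

lemma comult_right_map_in:
  "comult_right D (map (\<lambda>(a,y). (f a, y)) L) = map (\<lambda>(a,b,c). (f a, b, c)) (comult_right D L)"
  by (induction L) (auto simp: comult_right_def comp_def split_def)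

lemma comult_right_map_out:
  "comult_right (\<lambda>y. map (\<lambda>(b,c). (g b, c)) (D y)) L = map (\<lambda>(a,b,c). (a, g b, c)) (comult_right D L)"
  by (induction L) (auto simp: comult_right_def comp_def split_def)

lemma sum_list_concat_map: "sum_list (map g (concat xss)) = sum_list (map (\<lambda>xs. sum_list (map g xs)) xss)"
  by (induction xss) auto

lemma sum_list_swap:
  fixes f :: "'a \<Rightarrow> 'b \<Rightarrow> 'c::comm_monoid_add"
  shows
  "sum_list (map (\<lambda>x. sum_list (map (f x) ys)) xs) = sum_list (map (\<lambda>y. sum_list (map (\<lambda>x. f x y) xs)) ys)"
  by (induction xs) (auto simp: sum_list_addf)

definition malg :: "('k::field \<Rightarrow> 'h::ab_group_add \<Rightarrow> 'h) \<Rightarrow> 'h set \<Rightarrow> ('h \<Rightarrow> 'h \<Rightarrow> 'h) \<Rightarrow> bool" where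
  "malg sc A m \<longleftrightarrow> (\<forall>x\<in>A. \<forall>y\<in>A. m x y \<in> A) \<and> (\<forall>x\<in>A. lin_on sc A (\<lambda>y. m x y) \<and> lin_on sc A (\<lambda>y. m y x))"

lemma tmult3_sum:
  fixes \<phi> :: "'a \<Rightarrow> 'a \<Rightarrow> 'a \<Rightarrow> 'c::comm_monoid_add"
  shows
  "sum_list (map (\<lambda>(a,b,c). \<phi> a b c) (tmult3 m1 m2 m3 xs ys)) =
   sum_list (map (\<lambda>(a',b',c'). sum_list (map (\<lambda>(a,b,c). \<phi> (m1 a a') (m2 b b') (m3 c c')) xs)) ys)"
proof -
  have "sum_list (map (\<lambda>(a,b,c). \<phi> a b c) (tmult3 m1 m2 m3 xs ys)) =
    sum_list (map (\<lambda>(a,b,c). sum_list (map (\<lambda>(a',b',c'). \<phi> (m1 a a') (m2 b b') (m3 c c')) ys)) xs)"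
    unfolding tmult3_def sum_list_concat_map by (simp add: comp_def split_def)
  also have "\<dots> = sum_list (map (\<lambda>x. sum_list (map (\<lambda>y. (\<lambda>(a,b,c) (a',b',c'). \<phi> (m1 a a') (m2 b b') (m3 c c')) x y) ys)) xs)"
    by (simp add: split_def)
  also have "\<dots> = sum_list (map (\<lambda>y. sum_list (map (\<lambda>x. (\<lambda>(a,b,c) (a',b',c'). \<phi> (m1 a a') (m2 b b') (m3 c c')) x y) xs)) ys)"
    by (rule sum_list_swap[of "\<lambda>x y. (\<lambda>(a,b,c) (a',b',c'). \<phi> (m1 a a') (m2 b b') (m3 c c')) x y" ys xs])
  also have "\<dots> = sum_list (map (\<lambda>(a',b',c'). sum_list (map (\<lambda>(a,b,c). \<phi> (m1 a a') (m2 b b') (m3 c c')) xs)) ys)"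
    by (simp add: split_def)
  finally show ?thesis .
qed

lemma tmult3_set:
  assumes "set xs \<subseteq> A \<times> B \<times> C" "set ys \<subseteq> A \<times> B \<times> C" "malg sc A m1" "malg sc B m2" "malg sc C m3"
  shows "set (tmult3 m1 m2 m3 xs ys) \<subseteq> A \<times> B \<times> C"
  using assms unfolding tmult3_def malg_def by fastforce

lemma tmult3_cong_left:
  assumes t: "teq3 sc A B C xs xs'" and ys: "set ys \<subseteq> A \<times> B \<times> C"
    and m: "malg sc A m1" "malg sc B m2" "malg sc C m3"
  shows "teq3 sc A B C (tmult3 m1 m2 m3 xs ys) (tmult3 m1 m2 m3 xs' ys)"
  unfolding teq3_def
proof (intro conjI allI impI)
  show "set (tmult3 m1 m2 m3 xs ys) \<subseteq> A \<times> B \<times> C" "set (tmult3 m1 m2 m3 xs' ys) \<subseteq> A \<times> B \<times> C"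
    by (intro tmult3_set; use t ys m in \<open>auto simp: teq3_def\<close>)+
  fix \<phi> assume \<phi>: "trilin_on sc A B C \<phi>"
  have "sum_list (map (\<lambda>(a,b,c). \<phi> (m1 a a') (m2 b b') (m3 c c')) xs) =
        sum_list (map (\<lambda>(a,b,c). \<phi> (m1 a a') (m2 b b') (m3 c c')) xs')"
    if "(a',b',c') \<in> set ys" for a' b' c'
  proof -
    have "a' \<in> A" "b' \<in> B" "c' \<in> C" using that ys by auto
    then have "teq3 sc A B C (map (\<lambda>(a,b,c). (m1 a a', m2 b b', m3 c c')) xs) (map (\<lambda>(a,b,c). (m1 a a', m2 b b', m3 c c')) xs')"
      using m unfolding malg_def by (intro teq3_map[OF t]) auto
    then show ?thesis using \<phi> unfolding teq3_def by (auto simp: comp_def split_def)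
  qed
  then show "sum_list (map (\<lambda>(a,b,c). \<phi> a b c) (tmult3 m1 m2 m3 xs ys)) =
             sum_list (map (\<lambda>(a,b,c). \<phi> a b c) (tmult3 m1 m2 m3 xs' ys))"
    unfolding tmult3_sum by (intro arg_cong[where f=sum_list] map_cong) auto
qed

lemma tmult3_cong_right:
  assumes t: "teq3 sc A B C ys ys'" and xs: "set xs \<subseteq> A \<times> B \<times> C"
    and m: "malg sc A m1" "malg sc B m2" "malg sc C m3"
  shows "teq3 sc A B C (tmult3 m1 m2 m3 xs ys) (tmult3 m1 m2 m3 xs ys')"
  unfolding teq3_def
proof (intro conjI allI impI)
  show "set (tmult3 m1 m2 m3 xs ys) \<subseteq> A \<times> B \<times> C" "set (tmult3 m1 m2 m3 xs ys') \<subseteq> A \<times> B \<times> C"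
    by (intro tmult3_set; use t xs m in \<open>auto simp: teq3_def\<close>)+
  fix \<phi> assume \<phi>: "trilin_on sc A B C \<phi>"
  have inner: "sum_list (map (\<lambda>(a',b',c'). \<phi> (m1 a a') (m2 b b') (m3 c c')) ys) =
        sum_list (map (\<lambda>(a',b',c'). \<phi> (m1 a a') (m2 b b') (m3 c c')) ys')"
    if "(a,b,c) \<in> set xs" for a b c
  proof -
    have "a \<in> A" "b \<in> B" "c \<in> C" using that xs by auto
    then have "teq3 sc A B C (map (\<lambda>(a',b',c'). (m1 a a', m2 b b', m3 c c')) ys) (map (\<lambda>(a',b',c'). (m1 a a', m2 b b', m3 c c')) ys')"
      using m unfolding malg_def by (intro teq3_map[OF t]) auto
    then show ?thesis using \<phi> unfolding teq3_def by (auto simp: comp_def split_def)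
  qed
  show "sum_list (map (\<lambda>(a,b,c). \<phi> a b c) (tmult3 m1 m2 m3 xs ys)) =
             sum_list (map (\<lambda>(a,b,c). \<phi> a b c) (tmult3 m1 m2 m3 xs ys'))"
    unfolding tmult3_def sum_list_concat_map map_map
    apply (rule arg_cong[where f=sum_list], rule map_cong[OF refl])
    subgoal for x using inner by (cases x) (auto simp: comp_def split_def)
    done
qed

lemma tmult3_map:
  assumes "\<forall>(a,b,c)\<in>set xs. \<forall>(a',b',c')\<in>set ys.
     f (m1 a a') = n1 (f a) (f a') \<and> g (m2 b b') = n2 (g b) (g b') \<and> h (m3 c c') = n3 (h c) (h c')"
  shows "map (\<lambda>(a,b,c). (f a, g b, h c)) (tmult3 m1 m2 m3 xs ys) =
         tmult3 n1 n2 n3 (map (\<lambda>(a,b,c). (f a, g b, h c)) xs) (map (\<lambda>(a,b,c). (f a, g b, h c)) ys)"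
  using assms unfolding tmult3_def
  by (auto simp: map_concat comp_def split_def intro!: arg_cong[where f=concat] map_cong)

lemma tmult2_map:
  assumes "\<forall>(a,b)\<in>set xs. \<forall>(a',b')\<in>set ys. f (m1 a a') = n1 (f a) (f a') \<and> g (m2 b b') = n2 (g b) (g b')"
  shows "map (\<lambda>(a,b). (f a, g b)) (tmult2 m1 m2 xs ys) =
         tmult2 n1 n2 (map (\<lambda>(a,b). (f a, g b)) xs) (map (\<lambda>(a,b). (f a, g b)) ys)"
  using assms unfolding tmult2_def
  by (auto simp: map_concat comp_def split_def intro!: arg_cong[where f=concat] map_cong)




declare add_uminus_conv_diff[simp del]

locale CG =
  fixes scale :: "'k::field \<Rightarrow> 'h::ab_group_add \<Rightarrow> 'h"
    and H :: "'g::group_add \<Rightarrow> 'h set"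
    and mu :: "'g \<Rightarrow> 'h \<Rightarrow> 'h \<Rightarrow> 'h"
    and one :: "'g \<Rightarrow> 'h"
    and Delta :: "'g \<Rightarrow> 'g \<Rightarrow> 'h \<Rightarrow> ('h \<times> 'h) list"
    and eps :: "'h \<Rightarrow> 'k"
    and S :: "'g \<Rightarrow> 'h \<Rightarrow> 'h"
    and pi :: "'g \<Rightarrow> 'g \<Rightarrow> 'h \<Rightarrow> 'h"
  assumes ax: "crossed_gc_whq scale H mu one Delta eps S pi"
begin

lemma GC: "gc_whq scale H mu one Delta eps S"
  using ax unfolding crossed_gc_whq_def by blast

lemma AF: "algebra_family scale H mu one"
  using GC unfolding gc_whq_def by blast

lemma vs: "vector_space scale"
  using AF unfolding algebra_family_def by blast

lemma sub: "module.subspace scale (H p)"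
  using AF unfolding algebra_family_def by blast

lemma zero_in: "0 \<in> H p"
  using sub vs by (simp add: module.subspace_def module_iff_vector_space)
lemma add_in: "x \<in> H p \<Longrightarrow> y \<in> H p \<Longrightarrow> x + y \<in> H p"
  using sub vs by (simp add: module.subspace_def module_iff_vector_space)
lemma scale_in: "x \<in> H p \<Longrightarrow> scale c x \<in> H p"
  using sub vs by (simp add: module.subspace_def module_iff_vector_space)

lemma mu_in: "x \<in> H p \<Longrightarrow> y \<in> H p \<Longrightarrow> mu p x y \<in> H p"
  using AF unfolding algebra_family_def by blast
lemma mu_lin_r: "x \<in> H p \<Longrightarrow> lin_on scale (H p) (\<lambda>y. mu p x y)"
  using AF unfolding algebra_family_def by blast
lemma mu_lin_l: "x \<in> H p \<Longrightarrow> lin_on scale (H p) (\<lambda>y. mu p y x)"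
  using AF unfolding algebra_family_def by blast
lemma one_in: "one p \<in> H p"
  using AF unfolding algebra_family_def by blast
lemma one_l: "x \<in> H p \<Longrightarrow> mu p (one p) x = x"
  using AF unfolding algebra_family_def by blast
lemma one_r: "x \<in> H p \<Longrightarrow> mu p x (one p) = x"
  using AF unfolding algebra_family_def by blast
lemma malg: "malg scale (H p) (mu p)"
  unfolding malg_def using mu_in mu_lin_l mu_lin_r by blast

lemma D_set: "h \<in> H (p + q) \<Longrightarrow> set (Delta p q h) \<subseteq> H p \<times> H q"
  using GC unfolding gc_whq_def by (elim conjE) blast
lemma D_add: "x \<in> H (p + q) \<Longrightarrow> y \<in> H (p + q) \<Longrightarrow> teq2 scale (H p) (H q) (Delta p q (x + y)) (Delta p q x @ Delta p q y)"
  using GC unfolding gc_whq_def by (elim conjE) blast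
lemma D_scale: "x \<in> H (p + q) \<Longrightarrow> teq2 scale (H p) (H q) (Delta p q (scale c x)) (map (\<lambda>(a,b). (scale c a, b)) (Delta p q x))"
  using GC unfolding gc_whq_def by (elim conjE) blast
lemma coassoc: "h \<in> H (p + q + r) \<Longrightarrow> teq3 scale (H p) (H q) (H r) (comult_left (Delta p q) (Delta (p + q) r h))
                                     (comult_right (Delta q r) (Delta p (q + r) h))"
  using GC unfolding gc_whq_def by (elim conjE) blast
lemma eps_lin: "linform_on scale (H 0) eps"
  using GC unfolding gc_whq_def by (elim conjE) blast
lemma counit_l: "h \<in> H p \<Longrightarrow> sum_list (map (\<lambda>(a,b). scale (eps a) b) (Delta 0 p h)) = h"
  using GC unfolding gc_whq_def by (elim conjE) blast
lemma counit_r: "h \<in> H p \<Longrightarrow> sum_list (map (\<lambda>(a,b). scale (eps b) a) (Delta p 0 h)) = h"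
  using GC unfolding gc_whq_def by (elim conjE) blast
lemma D_mult0: "\<forall>p q. \<forall>g\<in>H (p + q). \<forall>h\<in>H (p + q).
        teq2 scale (H p) (H q) (Delta p q (mu (p + q) g h))
                               (tmult2 (mu p) (mu q) (Delta p q g) (Delta p q h))"
  using GC unfolding gc_whq_def by (elim conjE) assumption
lemma D_mult: "g \<in> H (p + q) \<Longrightarrow> h \<in> H (p + q) \<Longrightarrow>
        teq2 scale (H p) (H q) (Delta p q (mu (p + q) g h))
                               (tmult2 (mu p) (mu q) (Delta p q g) (Delta p q h))"
  using D_mult0 by blast
lemma unit0: "\<forall>p q r.
        teq3 scale (H p) (H q) (H r) (comult_left (Delta p q) (Delta (p + q) r (one (p + q + r))))
          (tmult3 (mu p) (mu q) (mu r)
             (map (\<lambda>(a,b). (a,b,one r)) (Delta p q (one (p + q))))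
             (map (\<lambda>(b,c). (one p,b,c)) (Delta q r (one (q + r))))) \<and>
        teq3 scale (H p) (H q) (H r) (comult_left (Delta p q) (Delta (p + q) r (one (p + q + r))))
          (tmult3 (mu p) (mu q) (mu r)
             (map (\<lambda>(b,c). (one p,b,c)) (Delta q r (one (q + r))))
             (map (\<lambda>(a,b). (a,b,one r)) (Delta p q (one (p + q)))))"
  using GC unfolding gc_whq_def by (elim conjE) assumption
lemma unit1: "teq3 scale (H p) (H q) (H r) (comult_left (Delta p q) (Delta (p + q) r (one (p + q + r))))
          (tmult3 (mu p) (mu q) (mu r)
             (map (\<lambda>(a,b). (a,b,one r)) (Delta p q (one (p + q))))
             (map (\<lambda>(b,c). (one p,b,c)) (Delta q r (one (q + r)))))"
  using unit0 by blast
lemma unit2: "teq3 scale (H p) (H q) (H r) (comult_left (Delta p q) (Delta (p + q) r (one (p + q + r))))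
          (tmult3 (mu p) (mu q) (mu r)
             (map (\<lambda>(b,c). (one p,b,c)) (Delta q r (one (q + r))))
             (map (\<lambda>(a,b). (a,b,one r)) (Delta p q (one (p + q)))))"
  using unit0 by blast
lemma epsw0: "\<forall>g\<in>H 0. \<forall>h\<in>H 0. \<forall>l\<in>H 0.
        eps (mu 0 (mu 0 g h) l) = eps (mu 0 g (mu 0 h l)) \<and>
        eps (mu 0 g (mu 0 h l)) = sum_list (map (\<lambda>(a,b). eps (mu 0 g b) * eps (mu 0 a l)) (Delta 0 0 h)) \<and>
        eps (mu 0 g (mu 0 h l)) = sum_list (map (\<lambda>(a,b). eps (mu 0 g a) * eps (mu 0 b l)) (Delta 0 0 h))"
  using GC unfolding gc_whq_def by (elim conjE) assumption
lemma S0: "\<forall>p. (\<forall>h\<in>H p. S p h \<in> H (- p)) \<and> lin_on scale (H p) (S p)"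
  using GC unfolding gc_whq_def by (elim conjE) assumption
lemma S_in: "h \<in> H p \<Longrightarrow> S p h \<in> H (- p)"
  using S0 by blast
lemma S_lin: "lin_on scale (H p) (S p)"
  using S0 by blast
lemma S12: "\<forall>p. \<forall>h\<in>H p.
        S p h = sum_list (map (\<lambda>(a,b). mu (- p) (S p a) (epst scale mu one Delta eps (- p) b)) (Delta p 0 h)) \<and>
        S p h = sum_list (map (\<lambda>(a,b). mu (- p) (epss scale mu one Delta eps (- p) a) (S p b)) (Delta 0 p h))"
  using GC unfolding gc_whq_def by (elim conjE) assumption
lemma S1: "h \<in> H p \<Longrightarrow> S p h = sum_list (map (\<lambda>(a,b). mu (- p) (S p a) (epst scale mu one Delta eps (- p) b)) (Delta p 0 h))"
  using S12 by blast
lemma S2: "h \<in> H p \<Longrightarrow> S p h = sum_list (map (\<lambda>(a,b). mu (- p) (epss scale mu one Delta eps (- p) a) (S p b)) (Delta 0 p h))"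
  using S12 by blast
lemma Q0: "\<forall>p. \<forall>h\<in>H 0. \<forall>g\<in>H p.
        sum_list (map (\<lambda>(a,b). mu p (S (- p) a) (mu p b g)) (Delta (- p) p h))
          = mu p (epss scale mu one Delta eps p h) g \<and>
        sum_list (map (\<lambda>(a,b). mu p a (mu p (S (- p) b) g)) (Delta p (- p) h))
          = mu p (epst scale mu one Delta eps p h) g \<and>
        sum_list (map (\<lambda>(a,b). mu p (mu p g a) (S (- p) b)) (Delta p (- p) h))
          = mu p g (epst scale mu one Delta eps p h) \<and>
        sum_list (map (\<lambda>(a,b). mu p (mu p g (S (- p) a)) b) (Delta (- p) p h))
          = mu p g (epss scale mu one Delta eps p h)"
  using GC unfolding gc_whq_def by (elim conjE) assumption
lemma Q1: "h \<in> H 0 \<Longrightarrow> g \<in> H p \<Longrightarrow> sum_list (map (\<lambda>(a,b). mu p (S (- p) a) (mu p b g)) (Delta (- p) p h))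
          = mu p (epss scale mu one Delta eps p h) g"
  using Q0 by blast
lemma Q2: "h \<in> H 0 \<Longrightarrow> g \<in> H p \<Longrightarrow> sum_list (map (\<lambda>(a,b). mu p a (mu p (S (- p) b) g)) (Delta p (- p) h))
          = mu p (epst scale mu one Delta eps p h) g"
  using Q0 by blast
lemma Q3: "h \<in> H 0 \<Longrightarrow> g \<in> H p \<Longrightarrow> sum_list (map (\<lambda>(a,b). mu p (mu p g a) (S (- p) b)) (Delta p (- p) h))
          = mu p g (epst scale mu one Delta eps p h)"
  using Q0 by blast
lemma Q4: "h \<in> H 0 \<Longrightarrow> g \<in> H p \<Longrightarrow> sum_list (map (\<lambda>(a,b). mu p (mu p g (S (- p) a)) b) (Delta (- p) p h))
          = mu p g (epss scale mu one Delta eps p h)"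
  using Q0 by blast
lemma CR: "(\<forall>p q. bij_betw (pi p q) (H q) (H (p + q - p)) \<and>
            lin_on scale (H q) (pi p q) \<and>
            (\<forall>x\<in>H q. \<forall>y\<in>H q. pi p q (mu q x y) = mu (p + q - p) (pi p q x) (pi p q y)) \<and>
            pi p q (one q) = one (p + q - p)) \<and>
     (\<forall>p q r. \<forall>h\<in>H (q + r).
        teq2 scale (H (p + q - p)) (H (p + r - p))
          (map (\<lambda>(a,b). (pi p q a, pi p r b)) (Delta q r h))
          (Delta (p + q - p) (p + r - p) (pi p (q + r) h))) \<and>
     (\<forall>p. \<forall>h\<in>H 0. eps (pi p 0 h) = eps h) \<and>
     (\<forall>p q r. \<forall>h\<in>H r. pi (p + q) r h = pi p (q + r - q) (pi q r h))"
  by (rule conjunct2[OF ax[unfolded crossed_gc_whq_def]])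
lemma CR1: "bij_betw (pi p q) (H q) (H (p + q - p)) \<and>
            lin_on scale (H q) (pi p q) \<and>
            (\<forall>x\<in>H q. \<forall>y\<in>H q. pi p q (mu q x y) = mu (p + q - p) (pi p q x) (pi p q y)) \<and>
            pi p q (one q) = one (p + q - p)"
  using conjunct1[OF CR] by blast
lemma pi_bij0: "bij_betw (pi p q) (H q) (H (p + q - p))"
  using CR1 by blast
lemma pi_lin: "lin_on scale (H q) (pi p q)"
  using CR1 by blast
lemma pi_mu0: "x \<in> H q \<Longrightarrow> y \<in> H q \<Longrightarrow> pi p q (mu q x y) = mu (p + q - p) (pi p q x) (pi p q y)"
  using CR1 by blast
lemma pi_one0: "pi p q (one q) = one (p + q - p)"
  using CR1 by blast
lemma pi_D0: "h \<in> H (q + r) \<Longrightarrow> teq2 scale (H (p + q - p)) (H (p + r - p))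
          (map (\<lambda>(a,b). (pi p q a, pi p r b)) (Delta q r h))
          (Delta (p + q - p) (p + r - p) (pi p (q + r) h))"
  using conjunct1[OF conjunct2[OF CR]] by blast
lemma eps_pi: "h \<in> H 0 \<Longrightarrow> eps (pi p 0 h) = eps h"
  using conjunct1[OF conjunct2[OF conjunct2[OF CR]]] by blast
lemma pi_comp0: "h \<in> H r \<Longrightarrow> pi (p + q) r h = pi p (q + r - q) (pi q r h)"
  using conjunct2[OF conjunct2[OF conjunct2[OF CR]]] by blast

lemmas gsimps = add.assoc diff_conv_add_uminus minus_add

lemma pi_in: "x \<in> H q \<Longrightarrow> q' = p + q - p \<Longrightarrow> pi p q x \<in> H q'"
  using pi_bij0[of p q] by (auto dest: bij_betwE)
lemma pi_inj: "x \<in> H q \<Longrightarrow> y \<in> H q \<Longrightarrow> pi p q x = pi p q y \<Longrightarrow> x = y"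
  using pi_bij0[of p q] by (auto dest: bij_betw_imp_inj_on inj_onD)
lemma pi_add: "x \<in> H q \<Longrightarrow> y \<in> H q \<Longrightarrow> pi p q (x + y) = pi p q x + pi p q y"
  using pi_lin[of q p] unfolding lin_on_def by blast
lemma pi_scale: "x \<in> H q \<Longrightarrow> pi p q (scale c x) = scale c (pi p q x)"
  using pi_lin[of q p] unfolding lin_on_def by blast
lemma pi_mu: "x \<in> H q \<Longrightarrow> y \<in> H q \<Longrightarrow> q' = p + q - p \<Longrightarrow> pi p q (mu q x y) = mu q' (pi p q x) (pi p q y)"
  using pi_mu0 by blast
lemma pi_one: "q' = p + q - p \<Longrightarrow> pi p q (one q) = one q'"
  using pi_one0 by blast
lemma pi_D: "h \<in> H c \<Longrightarrow> c = a + b \<Longrightarrow> a' = p + a - p \<Longrightarrow> b' = p + b - p \<Longrightarrow>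
   teq2 scale (H a') (H b') (map (\<lambda>(x,y). (pi p a x, pi p b y)) (Delta a b h)) (Delta a' b' (pi p c h))"
  using pi_D0 by blast
lemma pi_comp: "x \<in> H r \<Longrightarrow> r' = q + r - q \<Longrightarrow> pi p r' (pi q r x) = pi (p + q) r x"
  using pi_comp0 by simp
lemma pi0: "x \<in> H q \<Longrightarrow> pi 0 q x = x"
proof -
  assume x: "x \<in> H q"
  have "pi 0 q (pi 0 q x) = pi 0 q x"
    using pi_comp[OF x, of q 0 0] by simp
  moreover have "pi 0 q x \<in> H q" by (rule pi_in[OF x]) simp
  ultimately show ?thesis using pi_inj[OF _ x] by blast
qed
lemma pi_inv: "x \<in> H q \<Longrightarrow> q' = - p + q - - p \<Longrightarrow> pi p q' (pi (- p) q x) = x"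
  using pi_comp[of x q q' "- p" p] pi0 by simp

lemma lin_sum:
  assumes "lin_on scale (H q) F" "\<forall>x\<in>set xs. f x \<in> H q"
  shows "F (sum_list (map f xs)) = sum_list (map (\<lambda>x. F (f x)) xs)"
proof -
  have "F 0 = 0" using assms(1) zero_in[of q] unfolding lin_on_def
    by (metis add_0 add_cancel_right_right)
  moreover have "\<forall>x\<in>set xs. f x \<in> H q \<Longrightarrow> sum_list (map f xs) \<in> H q" for xs
    by (induction xs) (auto intro: add_in zero_in)
  ultimately show ?thesis using assms
    by (induction xs) (auto simp: lin_on_def)
qed

lemma sum_in: "\<forall>x\<in>set xs. f x \<in> H q \<Longrightarrow> sum_list (map f xs) \<in> H q"
  by (induction xs) (auto intro: add_in zero_in)

lemma pi_sum: "\<forall>x\<in>set xs. f x \<in> H q \<Longrightarrow> pi p q (sum_list (map f xs)) = sum_list (map (\<lambda>x. pi p q (f x)) xs)"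
  by (rule lin_sum[OF pi_lin])

end



lemma lin_on_id: "lin_on sc A (\<lambda>x. x)"
  unfolding lin_on_def by simp

context CG begin

lemma teq2_pi1:
  assumes "teq2 scale (H b) (H c) xs ys" "b' = q + b - q"
  shows "teq2 scale (H b') (H c) (map (\<lambda>(x,y). (pi q b x, y)) xs) (map (\<lambda>(x,y). (pi q b x, y)) ys)"
  using teq2_map[OF assms(1) pi_lin[of b q] _ lin_on_id, of "H b'" "H c"] pi_in assms(2) by auto

lemma M_alg: "algebra_family scale (mirror_H H) (mirror_mu mu) (mirror_one one)"
  using AF unfolding algebra_family_def mirror_H_def mirror_mu_def mirror_one_def by blast

lemma tD_set: "h \<in> H (- (p + q)) \<Longrightarrow> set (Delta (- q + - p + q) (- q) h) \<subseteq> H (- q + - p + q) \<times> H (- q)"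
  by (rule D_set) (simp add: gsimps)

lemma M_set: "\<forall>p q. \<forall>h\<in>mirror_H H (p + q). set (mirror_Delta pi Delta p q h) \<subseteq> mirror_H H p \<times> mirror_H H q"
proof (intro allI ballI)
  fix p q h assume h: "h \<in> mirror_H H (p + q)"
  show "set (mirror_Delta pi Delta p q h) \<subseteq> mirror_H H p \<times> mirror_H H q"
    using tD_set[of h p q] h unfolding mirror_H_def mirror_Delta_def
    by (auto intro!: pi_in simp: gsimps)
qed

lemma M_add: "\<forall>p q. \<forall>x\<in>mirror_H H (p + q). \<forall>y\<in>mirror_H H (p + q).
        teq2 scale (mirror_H H p) (mirror_H H q) (mirror_Delta pi Delta p q (x + y)) (mirror_Delta pi Delta p q x @ mirror_Delta pi Delta p q y)"
proof (intro allI ballI)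
  fix p q x y assume x: "x \<in> mirror_H H (p + q)" and y: "y \<in> mirror_H H (p + q)"
  have e: "- (p + q) = (- q + - p + q) + - q" by (simp add: gsimps)
  have "teq2 scale (H (- q + - p + q)) (H (- q)) (Delta (- q + - p + q) (- q) (x + y)) (Delta (- q + - p + q) (- q) x @ Delta (- q + - p + q) (- q) y)"
    using x y e unfolding mirror_H_def by (intro D_add) auto
  from teq2_pi1[OF this, of "- p" q] show "teq2 scale (mirror_H H p) (mirror_H H q) (mirror_Delta pi Delta p q (x + y)) (mirror_Delta pi Delta p q x @ mirror_Delta pi Delta p q y)"
    unfolding mirror_H_def mirror_Delta_def by (simp add: gsimps)
qed

lemma M_scale: "\<forall>p q c. \<forall>x\<in>mirror_H H (p + q).
        teq2 scale (mirror_H H p) (mirror_H H q) (mirror_Delta pi Delta p q (scale c x)) (map (\<lambda>(a,b). (scale c a, b)) (mirror_Delta pi Delta p q x))"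
proof (intro allI ballI)
  fix p q c x assume x: "x \<in> mirror_H H (p + q)"
  have e: "- (p + q) = (- q + - p + q) + - q" by (simp add: gsimps)
  have xx: "x \<in> H ((- q + - p + q) + - q)" using x e unfolding mirror_H_def by simp
  have "teq2 scale (H (- q + - p + q)) (H (- q)) (Delta (- q + - p + q) (- q) (scale c x)) (map (\<lambda>(a,b). (scale c a, b)) (Delta (- q + - p + q) (- q) x))"
    using xx by (intro D_scale)
  from teq2_pi1[OF this, of "- p" q]
  have "teq2 scale (H (- p)) (H (- q)) (mirror_Delta pi Delta p q (scale c x))
     (map (\<lambda>(a,b). (pi q (- q + - p + q) (scale c a), b)) (Delta (- q + - p + q) (- q) x))"
    unfolding mirror_Delta_def by (simp add: gsimps comp_def split_def)
  moreover have "map (\<lambda>(a,b). (pi q (- q + - p + q) (scale c a), b)) (Delta (- q + - p + q) (- q) x)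
     = map (\<lambda>(a,b). (scale c a, b)) (mirror_Delta pi Delta p q x)"
    unfolding mirror_Delta_def using D_set[OF xx]
    by (auto simp: pi_scale intro!: map_cong)
  ultimately show "teq2 scale (mirror_H H p) (mirror_H H q) (mirror_Delta pi Delta p q (scale c x)) (map (\<lambda>(a,b). (scale c a, b)) (mirror_Delta pi Delta p q x))"
    unfolding mirror_H_def by simp
qed


lemma Dpi_form:
  assumes a: "a \<in> H (- r + - (p + q) + r)"
  shows "teq2 scale (H (- p)) (H (- q))
     (map (\<lambda>(x,y). (pi (q + r) (- (q + r) + - p + (q + r)) x, pi r (- r + - q + r) y))
        (Delta (- (q + r) + - p + (q + r)) (- r + - q + r) a))
     (mirror_Delta pi Delta p q (pi r (- r + - (p + q) + r) a))"
proof -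
  let ?g = "- (q + r) + - p + (q + r)" and ?d = "- r + - q + r" and ?al = "- r + - (p + q) + r"
    and ?b = "- q + - p + q"
  have aa: "a \<in> H (?g + ?d)" using a by (simp add: gsimps)
  have "teq2 scale (H ?b) (H (- q)) (map (\<lambda>(x,y). (pi r ?g x, pi r ?d y)) (Delta ?g ?d a))
      (Delta ?b (- q) (pi r ?al a))"
    by (rule pi_D[OF a]) (simp_all add: gsimps)
  from teq2_pi1[OF this, of "- p" q]
  have "teq2 scale (H (- p)) (H (- q)) (map (\<lambda>(x,y). (pi q ?b (pi r ?g x), pi r ?d y)) (Delta ?g ?d a))
      (mirror_Delta pi Delta p q (pi r ?al a))"
    unfolding mirror_Delta_def by (simp add: gsimps comp_def split_def)
  moreover have "map (\<lambda>(x,y). (pi q ?b (pi r ?g x), pi r ?d y)) (Delta ?g ?d a) =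
     map (\<lambda>(x,y). (pi (q + r) ?g x, pi r ?d y)) (Delta ?g ?d a)"
    using D_set[OF aa] by (auto intro!: map_cong pi_comp simp: gsimps)
  ultimately show ?thesis by simp
qed

lemma left_form:
  assumes h: "h \<in> H (- (p + q + r))"
  shows "teq3 scale (H (- p)) (H (- q)) (H (- r))
    (comult_left (mirror_Delta pi Delta p q) (mirror_Delta pi Delta (p + q) r h))
    (map (\<lambda>(x,y,z). (pi (q + r) (- (q + r) + - p + (q + r)) x, pi r (- r + - q + r) y, z))
       (comult_left (Delta (- (q + r) + - p + (q + r)) (- r + - q + r)) (Delta (- r + - (p + q) + r) (- r) h)))"
proof -
  let ?g = "- (q + r) + - p + (q + r)" and ?d = "- r + - q + r" and ?al = "- r + - (p + q) + r"
  have hh: "h \<in> H (?al + - r)" using h by (simp add: gsimps)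
  have "comult_left (mirror_Delta pi Delta p q) (mirror_Delta pi Delta (p + q) r h) =
        comult_left (\<lambda>a. mirror_Delta pi Delta p q (pi r ?al a)) (Delta ?al (- r) h)"
    unfolding mirror_Delta_def[of pi Delta "p + q"] by (rule comult_left_map_in)
  moreover have "map (\<lambda>(x,y,z). (pi (q + r) ?g x, pi r ?d y, z)) (comult_left (Delta ?g ?d) (Delta ?al (- r) h))
     = comult_left (\<lambda>a. map (\<lambda>(x,y). (pi (q + r) ?g x, pi r ?d y)) (Delta ?g ?d a)) (Delta ?al (- r) h)"
    by (rule comult_left_map_out[symmetric])
  moreover have "teq3 scale (H (- p)) (H (- q)) (H (- r))
      (comult_left (\<lambda>a. mirror_Delta pi Delta p q (pi r ?al a)) (Delta ?al (- r) h))
      (comult_left (\<lambda>a. map (\<lambda>(x,y). (pi (q + r) ?g x, pi r ?d y)) (Delta ?g ?d a)) (Delta ?al (- r) h))"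
    by (rule comult_left_cong[OF D_set[OF hh]]) (rule teq2_sym, rule Dpi_form)
  ultimately show ?thesis by simp
qed

lemma right_form:
  "comult_right (mirror_Delta pi Delta q r) (mirror_Delta pi Delta p (q + r) h) =
    map (\<lambda>(x,y,z). (pi (q + r) (- (q + r) + - p + (q + r)) x, pi r (- r + - q + r) y, z))
       (comult_right (Delta (- r + - q + r) (- r)) (Delta (- (q + r) + - p + (q + r)) (- (q + r)) h))"
  unfolding mirror_Delta_def[of pi Delta p] comult_right_map_in
  unfolding mirror_Delta_def comult_right_map_out
  by (simp add: comp_def split_def)

lemma M_coassoc: "\<forall>p q r. \<forall>h\<in>mirror_H H (p + q + r).
        teq3 scale (mirror_H H p) (mirror_H H q) (mirror_H H r) (comult_left (mirror_Delta pi Delta p q) (mirror_Delta pi Delta (p + q) r h))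
                                     (comult_right (mirror_Delta pi Delta q r) (mirror_Delta pi Delta p (q + r) h))"
proof (intro allI ballI)
  fix p q r h assume h0: "h \<in> mirror_H H (p + q + r)"
  let ?g = "- (q + r) + - p + (q + r)" and ?d = "- r + - q + r" and ?al = "- r + - (p + q) + r"
  have h: "h \<in> H (- (p + q + r))" using h0 unfolding mirror_H_def .
  have e1: "?g + ?d = ?al" and e2: "?d + - r = - (q + r)" by (simp_all add: gsimps)
  have hh: "h \<in> H (?g + ?d + - r)" using h by (simp add: gsimps)
  have c: "teq3 scale (H ?g) (H ?d) (H (- r)) (comult_left (Delta ?g ?d) (Delta ?al (- r) h))
     (comult_right (Delta ?d (- r)) (Delta ?g (- (q + r)) h))"
    using coassoc[OF hh] unfolding e1 e2 .
  have "teq3 scale (H (- p)) (H (- q)) (H (- r))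
     (map (\<lambda>(x,y,z). (pi (q + r) ?g x, pi r ?d y, z)) (comult_left (Delta ?g ?d) (Delta ?al (- r) h)))
     (map (\<lambda>(x,y,z). (pi (q + r) ?g x, pi r ?d y, z)) (comult_right (Delta ?d (- r)) (Delta ?g (- (q + r)) h)))"
    by (rule teq3_map[OF c pi_lin _ pi_lin _ lin_on_id]) (auto intro: pi_in simp: gsimps)
  with left_form[OF h] show "teq3 scale (mirror_H H p) (mirror_H H q) (mirror_H H r)
     (comult_left (mirror_Delta pi Delta p q) (mirror_Delta pi Delta (p + q) r h))
     (comult_right (mirror_Delta pi Delta q r) (mirror_Delta pi Delta p (q + r) h))"
    unfolding right_form mirror_H_def by (rule teq3_trans)
qed


lemma M_eps_lin: "linform_on scale (mirror_H H 0) eps"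
  using eps_lin unfolding mirror_H_def by simp

lemma M_counit: "\<forall>p. \<forall>h\<in>mirror_H H p. sum_list (map (\<lambda>(a,b). scale (eps a) b) (mirror_Delta pi Delta 0 p h)) = h \<and>
                  sum_list (map (\<lambda>(a,b). scale (eps b) a) (mirror_Delta pi Delta p 0 h)) = h"
proof (intro allI ballI conjI)
  fix p h assume h0: "h \<in> mirror_H H p"
  then have h: "h \<in> H (0 + - p)" "h \<in> H (- p + 0)" unfolding mirror_H_def by simp_all
  have "sum_list (map (\<lambda>(a,b). scale (eps a) b) (mirror_Delta pi Delta 0 p h)) =
        sum_list (map (\<lambda>(a,b). scale (eps (pi p 0 a)) b) (Delta 0 (- p) h))"
    unfolding mirror_Delta_def by (simp add: comp_def split_def)
  also have "\<dots> = sum_list (map (\<lambda>(a,b). scale (eps a) b) (Delta 0 (- p) h))"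
    using D_set[OF h(1)] by (auto simp: eps_pi intro!: arg_cong[where f=sum_list] map_cong)
  also have "\<dots> = h" using counit_l h by simp
  finally show "sum_list (map (\<lambda>(a,b). scale (eps a) b) (mirror_Delta pi Delta 0 p h)) = h" .
  have "sum_list (map (\<lambda>(a,b). scale (eps b) a) (mirror_Delta pi Delta p 0 h)) =
        sum_list (map (\<lambda>(a,b). scale (eps b) (pi 0 (- p) a)) (Delta (- p) 0 h))"
    unfolding mirror_Delta_def by (simp add: comp_def split_def)
  also have "\<dots> = sum_list (map (\<lambda>(a,b). scale (eps b) a) (Delta (- p) 0 h))"
    using D_set[OF h(2)] by (auto simp: pi0 intro!: arg_cong[where f=sum_list] map_cong)
  also have "\<dots> = h" using counit_r h by simp
  finally show "sum_list (map (\<lambda>(a,b). scale (eps b) a) (mirror_Delta pi Delta p 0 h)) = h" .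
qed

end


context CG begin
lemma M_mult: "\<forall>p q. \<forall>g\<in>mirror_H H (p + q). \<forall>h\<in>mirror_H H (p + q).
        teq2 scale (mirror_H H p) (mirror_H H q) (mirror_Delta pi Delta p q (mirror_mu mu (p + q) g h))
                               (tmult2 (mirror_mu mu p) (mirror_mu mu q) (mirror_Delta pi Delta p q g) (mirror_Delta pi Delta p q h))"
proof (intro allI ballI)
  fix p q g h assume g0: "g \<in> mirror_H H (p + q)" and h0: "h \<in> mirror_H H (p + q)"
  let ?b = "- q + - p + q"
  have e: "?b + - q = - (p + q)" by (simp add: gsimps)
  have g: "g \<in> H (?b + - q)" and h: "h \<in> H (?b + - q)" using g0 h0 e unfolding mirror_H_def by simp_all
  have "teq2 scale (H ?b) (H (- q)) (Delta ?b (- q) (mu (- (p + q)) g h))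
                               (tmult2 (mu ?b) (mu (- q)) (Delta ?b (- q) g) (Delta ?b (- q) h))"
    using D_mult[OF g h] unfolding e .
  from teq2_pi1[OF this, of "- p" q]
  have "teq2 scale (H (- p)) (H (- q)) (mirror_Delta pi Delta p q (mu (- (p + q)) g h))
     (map (\<lambda>(x,y). (pi q ?b x, y)) (tmult2 (mu ?b) (mu (- q)) (Delta ?b (- q) g) (Delta ?b (- q) h)))"
    unfolding mirror_Delta_def by (simp add: gsimps)
  moreover have "map (\<lambda>(x,y). (pi q ?b x, y)) (tmult2 (mu ?b) (mu (- q)) (Delta ?b (- q) g) (Delta ?b (- q) h))
     = tmult2 (mu (- p)) (mu (- q)) (mirror_Delta pi Delta p q g) (mirror_Delta pi Delta p q h)"
    unfolding mirror_Delta_def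
    by (rule tmult2_map) (use D_set[OF g] D_set[OF h] in \<open>auto intro!: pi_mu simp: gsimps\<close>)
  ultimately show "teq2 scale (mirror_H H p) (mirror_H H q) (mirror_Delta pi Delta p q (mirror_mu mu (p + q) g h))
     (tmult2 (mirror_mu mu p) (mirror_mu mu q) (mirror_Delta pi Delta p q g) (mirror_Delta pi Delta p q h))"
    unfolding mirror_H_def mirror_mu_def by simp
qed


lemma FX:
  "teq3 scale (H (- p)) (H (- q)) (H (- r))
     (map (\<lambda>(x,y,z). (pi (q + r) (- (q + r) + - p + (q + r)) x, pi r (- r + - q + r) y, z))
        (map (\<lambda>(a,b). (a,b,one (- r))) (Delta (- (q + r) + - p + (q + r)) (- r + - q + r) (one (- r + - (p + q) + r)))))
     (map (\<lambda>(a,b). (a,b,one (- r))) (mirror_Delta pi Delta p q (one (- (p + q)))))"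
proof -
  let ?g = "- (q + r) + - p + (q + r)" and ?d = "- r + - q + r" and ?al = "- r + - (p + q) + r"
  have "pi r ?al (one ?al) = one (- (p + q))" by (rule pi_one) (simp add: gsimps)
  then have "teq2 scale (H (- p)) (H (- q))
     (map (\<lambda>(x,y). (pi (q + r) ?g x, pi r ?d y)) (Delta ?g ?d (one ?al)))
     (mirror_Delta pi Delta p q (one (- (p + q))))"
    using Dpi_form[OF one_in[of ?al]] by simp
  from teq_2to3[OF this one_in[of "- r"]] show ?thesis
    by (simp add: comp_def split_def)
qed

lemma FY:
  "map (\<lambda>(x,y,z). (pi (q + r) (- (q + r) + - p + (q + r)) x, pi r (- r + - q + r) y, z))
        (map (\<lambda>(b,c). (one (- (q + r) + - p + (q + r)), b, c)) (Delta (- r + - q + r) (- r) (one (- (q + r)))))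
   = map (\<lambda>(b,c). (one (- p), b, c)) (mirror_Delta pi Delta q r (one (- (q + r))))"
proof -
  have "pi (q + r) (- (q + r) + - p + (q + r)) (one (- (q + r) + - p + (q + r))) = one (- p)"
    by (rule pi_one) (simp add: gsimps)
  then show ?thesis unfolding mirror_Delta_def by (simp add: comp_def split_def)
qed

lemma unit_pre:
  "teq3 scale (H (- p)) (H (- q)) (H (- r))
    (comult_left (mirror_Delta pi Delta p q) (mirror_Delta pi Delta (p + q) r (one (- (p + q + r)))))
    (map (\<lambda>(x,y,z). (pi (q + r) (- (q + r) + - p + (q + r)) x, pi r (- r + - q + r) y, z))
      (tmult3 (mu (- (q + r) + - p + (q + r))) (mu (- r + - q + r)) (mu (- r))
             (map (\<lambda>(a,b). (a,b,one (- r))) (Delta (- (q + r) + - p + (q + r)) (- r + - q + r) (one (- r + - (p + q) + r))))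
             (map (\<lambda>(b,c). (one (- (q + r) + - p + (q + r)),b,c)) (Delta (- r + - q + r) (- r) (one (- (q + r)))))))
   \<and> teq3 scale (H (- p)) (H (- q)) (H (- r))
    (comult_left (mirror_Delta pi Delta p q) (mirror_Delta pi Delta (p + q) r (one (- (p + q + r)))))
    (map (\<lambda>(x,y,z). (pi (q + r) (- (q + r) + - p + (q + r)) x, pi r (- r + - q + r) y, z))
      (tmult3 (mu (- (q + r) + - p + (q + r))) (mu (- r + - q + r)) (mu (- r))
             (map (\<lambda>(b,c). (one (- (q + r) + - p + (q + r)),b,c)) (Delta (- r + - q + r) (- r) (one (- (q + r)))))
             (map (\<lambda>(a,b). (a,b,one (- r))) (Delta (- (q + r) + - p + (q + r)) (- r + - q + r) (one (- r + - (p + q) + r))))))"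
proof -
  let ?g = "- (q + r) + - p + (q + r)" and ?d = "- r + - q + r" and ?al = "- r + - (p + q) + r"
  have e1: "?g + ?d = ?al" and e2: "?d + - r = - (q + r)" and e3: "?al + - r = - (p + q + r)"
    by (simp_all add: gsimps)
  have u1: "teq3 scale (H ?g) (H ?d) (H (- r)) (comult_left (Delta ?g ?d) (Delta ?al (- r) (one (- (p + q + r)))))
      (tmult3 (mu ?g) (mu ?d) (mu (- r))
             (map (\<lambda>(a,b). (a,b,one (- r))) (Delta ?g ?d (one ?al)))
             (map (\<lambda>(b,c). (one ?g,b,c)) (Delta ?d (- r) (one (- (q + r))))))"
    using unit1[of ?g ?d "- r"] unfolding e1 e2 e3 .
  have u2: "teq3 scale (H ?g) (H ?d) (H (- r)) (comult_left (Delta ?g ?d) (Delta ?al (- r) (one (- (p + q + r)))))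
      (tmult3 (mu ?g) (mu ?d) (mu (- r))
             (map (\<lambda>(b,c). (one ?g,b,c)) (Delta ?d (- r) (one (- (q + r)))))
             (map (\<lambda>(a,b). (a,b,one (- r))) (Delta ?g ?d (one ?al))))"
    using unit2[of ?g ?d "- r"] unfolding e1 e2 e3 .
  have L: "teq3 scale (H (- p)) (H (- q)) (H (- r))
    (comult_left (mirror_Delta pi Delta p q) (mirror_Delta pi Delta (p + q) r (one (- (p + q + r)))))
    (map (\<lambda>(x,y,z). (pi (q + r) ?g x, pi r ?d y, z))
       (comult_left (Delta ?g ?d) (Delta ?al (- r) (one (- (p + q + r))))))"
    by (rule left_form[OF one_in])
  have m1: "teq3 scale (H (- p)) (H (- q)) (H (- r))
     (map (\<lambda>(x,y,z). (pi (q + r) ?g x, pi r ?d y, z)) (comult_left (Delta ?g ?d) (Delta ?al (- r) (one (- (p + q + r))))))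
     (map (\<lambda>(x,y,z). (pi (q + r) ?g x, pi r ?d y, z)) (tmult3 (mu ?g) (mu ?d) (mu (- r))
             (map (\<lambda>(a,b). (a,b,one (- r))) (Delta ?g ?d (one ?al)))
             (map (\<lambda>(b,c). (one ?g,b,c)) (Delta ?d (- r) (one (- (q + r)))))))"
    by (rule teq3_map[OF u1 pi_lin _ pi_lin _ lin_on_id]) (auto intro: pi_in simp: gsimps)
  have m2: "teq3 scale (H (- p)) (H (- q)) (H (- r))
     (map (\<lambda>(x,y,z). (pi (q + r) ?g x, pi r ?d y, z)) (comult_left (Delta ?g ?d) (Delta ?al (- r) (one (- (p + q + r))))))
     (map (\<lambda>(x,y,z). (pi (q + r) ?g x, pi r ?d y, z)) (tmult3 (mu ?g) (mu ?d) (mu (- r))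
             (map (\<lambda>(b,c). (one ?g,b,c)) (Delta ?d (- r) (one (- (q + r)))))
             (map (\<lambda>(a,b). (a,b,one (- r))) (Delta ?g ?d (one ?al)))))"
    by (rule teq3_map[OF u2 pi_lin _ pi_lin _ lin_on_id]) (auto intro: pi_in simp: gsimps)
  show ?thesis using teq3_trans[OF L m1] teq3_trans[OF L m2] by blast
qed


lemma tD_set2: "h \<in> H (- (p + q)) \<Longrightarrow> set (mirror_Delta pi Delta p q h) \<subseteq> H (- p) \<times> H (- q)"
  using M_set unfolding mirror_H_def by blast

lemma M_unit: "\<forall>p q r.
        teq3 scale (mirror_H H p) (mirror_H H q) (mirror_H H r) (comult_left (mirror_Delta pi Delta p q) (mirror_Delta pi Delta (p + q) r (mirror_one one (p + q + r))))
          (tmult3 (mirror_mu mu p) (mirror_mu mu q) (mirror_mu mu r)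
             (map (\<lambda>(a,b). (a,b,mirror_one one r)) (mirror_Delta pi Delta p q (mirror_one one (p + q))))
             (map (\<lambda>(b,c). (mirror_one one p,b,c)) (mirror_Delta pi Delta q r (mirror_one one (q + r))))) \<and>
        teq3 scale (mirror_H H p) (mirror_H H q) (mirror_H H r) (comult_left (mirror_Delta pi Delta p q) (mirror_Delta pi Delta (p + q) r (mirror_one one (p + q + r))))
          (tmult3 (mirror_mu mu p) (mirror_mu mu q) (mirror_mu mu r)
             (map (\<lambda>(b,c). (mirror_one one p,b,c)) (mirror_Delta pi Delta q r (mirror_one one (q + r))))
             (map (\<lambda>(a,b). (a,b,mirror_one one r)) (mirror_Delta pi Delta p q (mirror_one one (p + q)))))"
proof (intro allI)
  fix p q r :: 'g
  let ?g = "- (q + r) + - p + (q + r)" and ?d = "- r + - q + r" and ?al = "- r + - (p + q) + r"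
  let ?F = "\<lambda>(x,y,z). (pi (q + r) ?g x, pi r ?d y, z)"
  let ?X = "map (\<lambda>(a,b). (a,b,one (- r))) (Delta ?g ?d (one ?al))"
  let ?Y = "map (\<lambda>(b,c). (one ?g,b,c)) (Delta ?d (- r) (one (- (q + r))))"
  let ?X' = "map (\<lambda>(a,b). (a,b,one (- r))) (mirror_Delta pi Delta p q (one (- (p + q))))"
  let ?Y' = "map (\<lambda>(b,c). (one (- p), b, c)) (mirror_Delta pi Delta q r (one (- (q + r))))"
  have e1: "?al = ?g + ?d" and e2: "- (q + r) = ?d + - r" by (simp_all add: gsimps)
  have e4: "- p = (q + r) + ?g - (q + r)" and e5: "- q = r + ?d - r" by (simp_all add: gsimps)
  have sX: "set ?X \<subseteq> H ?g \<times> H ?d \<times> H (- r)"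
    using D_set[of "one ?al" ?g ?d] one_in[of ?al] one_in[of "- r"] unfolding e1[symmetric] by auto
  have sY: "set ?Y \<subseteq> H ?g \<times> H ?d \<times> H (- r)"
    using D_set[of "one (- (q + r))" ?d "- r"] one_in[of "- (q + r)"] one_in[of ?g] unfolding e2[symmetric] by auto
  have pw1: "pi (q + r) ?g (mu ?g x y) = mu (- p) (pi (q + r) ?g x) (pi (q + r) ?g y)" if "x \<in> H ?g" "y \<in> H ?g" for x y
    using pi_mu[OF that e4] .
  have pw2: "pi r ?d (mu ?d x y) = mu (- q) (pi r ?d x) (pi r ?d y)" if "x \<in> H ?d" "y \<in> H ?d" for x y
    using pi_mu[OF that e5] .
  have F3m: "map ?F (tmult3 (mu ?g) (mu ?d) (mu (- r)) A B) =
      tmult3 (mu (- p)) (mu (- q)) (mu (- r)) (map ?F A) (map ?F B)"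
    if "set A \<subseteq> H ?g \<times> H ?d \<times> H (- r)" "set B \<subseteq> H ?g \<times> H ?d \<times> H (- r)" for A B
  proof (rule tmult3_map)
    have m: "a \<in> H ?g" "b \<in> H ?d" if "(a,b,c) \<in> set A" for a b c using that(1) \<open>set A \<subseteq> _\<close> by auto
    have m': "a \<in> H ?g" "b \<in> H ?d" if "(a,b,c) \<in> set B" for a b c using that(1) \<open>set B \<subseteq> _\<close> by auto
    show "\<forall>(a,b,c)\<in>set A. \<forall>(a',b',c')\<in>set B.
       pi (q + r) ?g (mu ?g a a') = mu (- p) (pi (q + r) ?g a) (pi (q + r) ?g a') \<and>
       pi r ?d (mu ?d b b') = mu (- q) (pi r ?d b) (pi r ?d b') \<and> mu (- r) c c' = mu (- r) c c'"
      by (auto simp: pw1 pw2 m m')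
  qed
  have sY': "set ?Y' \<subseteq> H (- p) \<times> H (- q) \<times> H (- r)"
    using tD_set2[OF one_in[of "- (q + r)"]] one_in[of "- p"] by auto
  have sX': "set ?X' \<subseteq> H (- p) \<times> H (- q) \<times> H (- r)"
    using tD_set2[OF one_in[of "- (p + q)"]] one_in[of "- r"] by auto
  have eps_one: "- (p + q + r) = - (p + q + r)" ..
  have c1: "teq3 scale (H (- p)) (H (- q)) (H (- r)) (tmult3 (mu (- p)) (mu (- q)) (mu (- r)) (map ?F ?X) ?Y')
     (tmult3 (mu (- p)) (mu (- q)) (mu (- r)) ?X' ?Y')"
    by (rule tmult3_cong_left[OF FX sY' malg malg malg])
  have c2: "teq3 scale (H (- p)) (H (- q)) (H (- r)) (tmult3 (mu (- p)) (mu (- q)) (mu (- r)) ?Y' (map ?F ?X))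
     (tmult3 (mu (- p)) (mu (- q)) (mu (- r)) ?Y' ?X')"
    by (rule tmult3_cong_right[OF FX sY' malg malg malg])
  have P1: "teq3 scale (H (- p)) (H (- q)) (H (- r))
    (comult_left (mirror_Delta pi Delta p q) (mirror_Delta pi Delta (p + q) r (one (- (p + q + r)))))
    (tmult3 (mu (- p)) (mu (- q)) (mu (- r)) (map ?F ?X) ?Y')"
    using conjunct1[OF unit_pre[of p q r]] unfolding F3m[OF sX sY] FY .
  have P2: "teq3 scale (H (- p)) (H (- q)) (H (- r))
    (comult_left (mirror_Delta pi Delta p q) (mirror_Delta pi Delta (p + q) r (one (- (p + q + r)))))
    (tmult3 (mu (- p)) (mu (- q)) (mu (- r)) ?Y' (map ?F ?X))"
    using conjunct2[OF unit_pre[of p q r]] unfolding F3m[OF sY sX] FY .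
  show "teq3 scale (mirror_H H p) (mirror_H H q) (mirror_H H r) (comult_left (mirror_Delta pi Delta p q) (mirror_Delta pi Delta (p + q) r (mirror_one one (p + q + r))))
          (tmult3 (mirror_mu mu p) (mirror_mu mu q) (mirror_mu mu r)
             (map (\<lambda>(a,b). (a,b,mirror_one one r)) (mirror_Delta pi Delta p q (mirror_one one (p + q))))
             (map (\<lambda>(b,c). (mirror_one one p,b,c)) (mirror_Delta pi Delta q r (mirror_one one (q + r))))) \<and>
        teq3 scale (mirror_H H p) (mirror_H H q) (mirror_H H r) (comult_left (mirror_Delta pi Delta p q) (mirror_Delta pi Delta (p + q) r (mirror_one one (p + q + r))))
          (tmult3 (mirror_mu mu p) (mirror_mu mu q) (mirror_mu mu r)
             (map (\<lambda>(b,c). (mirror_one one p,b,c)) (mirror_Delta pi Delta q r (mirror_one one (q + r))))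
             (map (\<lambda>(a,b). (a,b,mirror_one one r)) (mirror_Delta pi Delta p q (mirror_one one (p + q)))))"
    unfolding mirror_H_def mirror_mu_def mirror_one_def
    using teq3_trans[OF P1 c1] teq3_trans[OF P2 c2] by blast
qed


lemma vsa: "scale a (x + y) = scale a x + scale a y" "scale (a + b) x = scale a x + scale b x"
  "scale a (scale b x) = scale (a * b) x" "scale 1 x = x"
  using vector_space.vector_space_assms[OF vs] by auto

lemma eps_add: "x \<in> H 0 \<Longrightarrow> y \<in> H 0 \<Longrightarrow> eps (x + y) = eps x + eps y"
  using eps_lin unfolding linform_on_def by blast
lemma eps_scale: "x \<in> H 0 \<Longrightarrow> eps (scale c x) = c * eps x"
  using eps_lin unfolding linform_on_def by blast
lemma mu_add_l: "x \<in> H p \<Longrightarrow> y \<in> H p \<Longrightarrow> k \<in> H p \<Longrightarrow> mu p (x + y) k = mu p x k + mu p y k"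
  using mu_lin_l[of k p] unfolding lin_on_def by blast
lemma mu_add_r: "x \<in> H p \<Longrightarrow> y \<in> H p \<Longrightarrow> k \<in> H p \<Longrightarrow> mu p k (x + y) = mu p k x + mu p k y"
  using mu_lin_r[of k p] unfolding lin_on_def by blast
lemma mu_scale_l: "x \<in> H p \<Longrightarrow> k \<in> H p \<Longrightarrow> mu p (scale c x) k = scale c (mu p x k)"
  using mu_lin_l[of k p] unfolding lin_on_def by blast
lemma mu_scale_r: "x \<in> H p \<Longrightarrow> k \<in> H p \<Longrightarrow> mu p k (scale c x) = scale c (mu p k x)"
  using mu_lin_r[of k p] unfolding lin_on_def by blast

lemma blin_epst: "k \<in> H 0 \<Longrightarrow> blinv scale (H 0) B (\<lambda>a b. scale (eps (mu 0 a k)) b)"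
  unfolding blinv_def lin_on_def
  by (auto simp: mu_add_l mu_scale_l eps_add eps_scale mu_in scale_in vsa mult.commute)

lemma blin_epss: "k \<in> H 0 \<Longrightarrow> blinv scale A (H 0) (\<lambda>a b. scale (eps (mu 0 k b)) a)"
  unfolding blinv_def lin_on_def
  by (auto simp: mu_add_r mu_scale_r eps_add eps_scale mu_in scale_in vsa mult.commute)

lemma epst_in: "h \<in> H 0 \<Longrightarrow> epst scale mu one Delta eps p h \<in> H p"
  unfolding epst_def using D_set[of "one p" 0 p] one_in[of p]
  by (intro sum_in) (auto intro: scale_in)

lemma epss_in: "h \<in> H 0 \<Longrightarrow> epss scale mu one Delta eps p h \<in> H p"
  unfolding epss_def using D_set[of "one p" p 0] one_in[of p]
  by (intro sum_in) (auto intro: scale_in)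

lemma pi_epst:
  assumes h: "h \<in> H 0" and e: "p' = x + p - x"
  shows "pi x p (epst scale mu one Delta eps p h) = epst scale mu one Delta eps p' (pi x 0 h)"
proof -
  have o: "one p \<in> H (0 + p)" using one_in by simp
  have sD: "set (Delta 0 p (one p)) \<subseteq> H 0 \<times> H p" using D_set[OF o] .
  have ph: "pi x 0 h \<in> H 0" by (rule pi_in[OF h]) (simp add: gsimps)
  have e0: "0 = x + 0 - x" by (simp add: gsimps)
  have "pi x p (epst scale mu one Delta eps p h) =
      sum_list (map (\<lambda>(a,b). pi x p (scale (eps (mu 0 a h)) b)) (Delta 0 p (one p)))"
    unfolding epst_def using sD by (subst pi_sum) (auto intro!: scale_in simp: split_def subset_iff)
  also have "\<dots> = sum_list (map (\<lambda>(a,b). scale (eps (mu 0 a (pi x 0 h))) b) (map (\<lambda>(a,b). (pi x 0 a, pi x p b)) (Delta 0 p (one p))))"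
  proof -
    have "pi x p (scale (eps (mu 0 a h)) b) = scale (eps (mu 0 (pi x 0 a) (pi x 0 h))) (pi x p b)"
      if "a \<in> H 0" "b \<in> H p" for a b
    proof -
      have "eps (mu 0 (pi x 0 a) (pi x 0 h)) = eps (pi x 0 (mu 0 a h))"
        using pi_mu[OF that(1) h e0] by simp
      also have "\<dots> = eps (mu 0 a h)" using eps_pi mu_in[OF that(1) h] by simp
      finally show ?thesis using pi_scale[OF that(2)] by simp
    qed
    then show ?thesis using sD by (auto simp: comp_def split_def intro!: arg_cong[where f=sum_list] map_cong)
  qed
  also have "\<dots> = sum_list (map (\<lambda>(a,b). scale (eps (mu 0 a (pi x 0 h))) b) (Delta 0 p' (pi x p (one p))))"
  proof -
    have "teq2 scale (H 0) (H p') (map (\<lambda>(a,b). (pi x 0 a, pi x p b)) (Delta 0 p (one p))) (Delta 0 p' (pi x p (one p)))"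
      by (rule pi_D[OF one_in _ e0 e]) simp
    from teq2_vec[OF vs this blin_epst[OF ph]] show ?thesis .
  qed
  also have "\<dots> = epst scale mu one Delta eps p' (pi x 0 h)"
    unfolding epst_def pi_one[OF e] ..
  finally show ?thesis .
qed

lemma pi_epss:
  assumes h: "h \<in> H 0" and e: "p' = x + p - x"
  shows "pi x p (epss scale mu one Delta eps p h) = epss scale mu one Delta eps p' (pi x 0 h)"
proof -
  have o: "one p \<in> H (p + 0)" using one_in by simp
  have sD: "set (Delta p 0 (one p)) \<subseteq> H p \<times> H 0" using D_set[OF o] .
  have ph: "pi x 0 h \<in> H 0" by (rule pi_in[OF h]) (simp add: gsimps)
  have e0: "0 = x + 0 - x" by (simp add: gsimps)
  have "pi x p (epss scale mu one Delta eps p h) =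
      sum_list (map (\<lambda>(a,b). pi x p (scale (eps (mu 0 h b)) a)) (Delta p 0 (one p)))"
    unfolding epss_def using sD by (subst pi_sum) (auto intro!: scale_in simp: split_def subset_iff)
  also have "\<dots> = sum_list (map (\<lambda>(a,b). scale (eps (mu 0 (pi x 0 h) b)) a) (map (\<lambda>(a,b). (pi x p a, pi x 0 b)) (Delta p 0 (one p))))"
  proof -
    have "pi x p (scale (eps (mu 0 h b)) a) = scale (eps (mu 0 (pi x 0 h) (pi x 0 b))) (pi x p a)"
      if "a \<in> H p" "b \<in> H 0" for a b
    proof -
      have "eps (mu 0 (pi x 0 h) (pi x 0 b)) = eps (pi x 0 (mu 0 h b))"
        using pi_mu[OF h that(2) e0] by simp
      also have "\<dots> = eps (mu 0 h b)" using eps_pi mu_in[OF h that(2)] by simp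
      finally show ?thesis using pi_scale[OF that(1)] by simp
    qed
    then show ?thesis using sD by (auto simp: comp_def split_def intro!: arg_cong[where f=sum_list] map_cong)
  qed
  also have "\<dots> = sum_list (map (\<lambda>(a,b). scale (eps (mu 0 (pi x 0 h) b)) a) (Delta p' 0 (pi x p (one p))))"
  proof -
    have "teq2 scale (H p') (H 0) (map (\<lambda>(a,b). (pi x p a, pi x 0 b)) (Delta p 0 (one p))) (Delta p' 0 (pi x p (one p)))"
      by (rule pi_D[OF one_in _ e e0]) simp
    from teq2_vec[OF vs this blin_epss[OF ph]] show ?thesis .
  qed
  also have "\<dots> = epss scale mu one Delta eps p' (pi x 0 h)"
    unfolding epss_def pi_one[OF e] ..
  finally show ?thesis .
qed

end


context CG begin

lemma pi_inv2: "x \<in> H q \<Longrightarrow> q' = p + q - p \<Longrightarrow> pi (- p) q' (pi p q x) = x"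
  using pi_comp[of x q q' p "- p"] pi0 by simp

lemma pi_comp': "x \<in> H r \<Longrightarrow> r' = q + r - q \<Longrightarrow> s = p + q \<Longrightarrow> pi p r' (pi q r x) = pi s r x"
  using pi_comp by simp

lemma tepst: "h \<in> H 0 \<Longrightarrow> epst scale (mirror_mu mu) (mirror_one one) (mirror_Delta pi Delta) eps p h
   = pi (- p) (- p) (epst scale mu one Delta eps (- p) h)"
proof -
  assume h: "h \<in> H 0"
  have o: "one (- p) \<in> H (0 + - p)" using one_in by simp
  have sD: "set (Delta 0 (- p) (one (- p))) \<subseteq> H 0 \<times> H (- p)" using D_set[OF o] .
  have ph: "pi (- p) 0 h \<in> H 0" by (rule pi_in[OF h]) (simp add: gsimps)
  have e0: "0 = p + 0 - p" by (simp add: gsimps)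
  have "epst scale (mirror_mu mu) (mirror_one one) (mirror_Delta pi Delta) eps p h =
     sum_list (map (\<lambda>(a,b). scale (eps (mu 0 (pi p 0 a) h)) b) (Delta 0 (- p) (one (- p))))"
    unfolding epst_def mirror_mu_def mirror_one_def mirror_Delta_def by (simp add: comp_def split_def)
  also have "\<dots> = sum_list (map (\<lambda>(a,b). scale (eps (mu 0 a (pi (- p) 0 h))) b) (Delta 0 (- p) (one (- p))))"
  proof -
    have "eps (mu 0 (pi p 0 a) h) = eps (mu 0 a (pi (- p) 0 h))" if a: "a \<in> H 0" for a
    proof -
      have "eps (mu 0 a (pi (- p) 0 h)) = eps (pi p 0 (mu 0 a (pi (- p) 0 h)))"
        using eps_pi mu_in[OF a ph] by simp
      also have "\<dots> = eps (mu 0 (pi p 0 a) (pi p 0 (pi (- p) 0 h)))"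
        using pi_mu[OF a ph e0] by simp
      also have "pi p 0 (pi (- p) 0 h) = h" by (rule pi_inv[OF h]) (simp add: gsimps)
      finally show ?thesis by simp
    qed
    then show ?thesis using sD by (auto intro!: arg_cong[where f=sum_list] map_cong)
  qed
  also have "\<dots> = epst scale mu one Delta eps (- p) (pi (- p) 0 h)"
    unfolding epst_def ..
  also have "\<dots> = pi (- p) (- p) (epst scale mu one Delta eps (- p) h)"
    by (rule pi_epst[OF h, symmetric]) (simp add: gsimps)
  finally show ?thesis .
qed

lemma tepss: "h \<in> H 0 \<Longrightarrow> epss scale (mirror_mu mu) (mirror_one one) (mirror_Delta pi Delta) eps p h
   = epss scale mu one Delta eps (- p) h"
proof -
  assume h: "h \<in> H 0"
  have o: "one (- p) \<in> H (- p + 0)" using one_in by simp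
  have sD: "set (Delta (- p) 0 (one (- p))) \<subseteq> H (- p) \<times> H 0" using D_set[OF o] .
  have "epss scale (mirror_mu mu) (mirror_one one) (mirror_Delta pi Delta) eps p h =
     sum_list (map (\<lambda>(a,b). scale (eps (mu 0 h b)) (pi 0 (- p) a)) (Delta (- p) 0 (one (- p))))"
    unfolding epss_def mirror_mu_def mirror_one_def mirror_Delta_def by (simp add: comp_def split_def)
  also have "\<dots> = epss scale mu one Delta eps (- p) h"
    unfolding epss_def using sD by (auto simp: pi0 intro!: arg_cong[where f=sum_list] map_cong)
  finally show ?thesis .
qed

lemma epsw: "g \<in> H 0 \<Longrightarrow> h \<in> H 0 \<Longrightarrow> l \<in> H 0 \<Longrightarrow>
        eps (mu 0 (mu 0 g h) l) = eps (mu 0 g (mu 0 h l)) \<and>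
        eps (mu 0 g (mu 0 h l)) = sum_list (map (\<lambda>(a,b). eps (mu 0 g b) * eps (mu 0 a l)) (Delta 0 0 h)) \<and>
        eps (mu 0 g (mu 0 h l)) = sum_list (map (\<lambda>(a,b). eps (mu 0 g a) * eps (mu 0 b l)) (Delta 0 0 h))"
  using epsw0 by blast

lemma M_eps2: "\<forall>g\<in>mirror_H H 0. \<forall>h\<in>mirror_H H 0. \<forall>l\<in>mirror_H H 0.
        eps (mirror_mu mu 0 (mirror_mu mu 0 g h) l) = eps (mirror_mu mu 0 g (mirror_mu mu 0 h l)) \<and>
        eps (mirror_mu mu 0 g (mirror_mu mu 0 h l)) = sum_list (map (\<lambda>(a,b). eps (mirror_mu mu 0 g b) * eps (mirror_mu mu 0 a l)) (mirror_Delta pi Delta 0 0 h)) \<and>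
        eps (mirror_mu mu 0 g (mirror_mu mu 0 h l)) = sum_list (map (\<lambda>(a,b). eps (mirror_mu mu 0 g a) * eps (mirror_mu mu 0 b l)) (mirror_Delta pi Delta 0 0 h))"
proof (intro ballI)
  fix g h l assume "g \<in> mirror_H H 0" "h \<in> mirror_H H 0" "l \<in> mirror_H H 0"
  then have g: "g \<in> H 0" and h: "h \<in> H 0" and l: "l \<in> H 0" unfolding mirror_H_def by simp_all
  have hh: "h \<in> H (0 + 0)" using h by simp
  have D: "mirror_Delta pi Delta 0 0 h = Delta 0 0 h"
    unfolding mirror_Delta_def using D_set[OF hh] by (auto simp: pi0 intro!: map_idI)
  then show "eps (mirror_mu mu 0 (mirror_mu mu 0 g h) l) = eps (mirror_mu mu 0 g (mirror_mu mu 0 h l)) \<and>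
        eps (mirror_mu mu 0 g (mirror_mu mu 0 h l)) = sum_list (map (\<lambda>(a,b). eps (mirror_mu mu 0 g b) * eps (mirror_mu mu 0 a l)) (mirror_Delta pi Delta 0 0 h)) \<and>
        eps (mirror_mu mu 0 g (mirror_mu mu 0 h l)) = sum_list (map (\<lambda>(a,b). eps (mirror_mu mu 0 g a) * eps (mirror_mu mu 0 b l)) (mirror_Delta pi Delta 0 0 h))"
    unfolding mirror_mu_def minus_zero D using epsw[OF g h l] by blast
qed

lemma M_S0: "\<forall>p. (\<forall>h\<in>mirror_H H p. mirror_S pi S p h \<in> mirror_H H (- p)) \<and> lin_on scale (mirror_H H p) (mirror_S pi S p)"
proof (intro allI conjI ballI)
  fix p :: 'g
  show "mirror_S pi S p h \<in> mirror_H H (- p)" if "h \<in> mirror_H H p" for h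
    using that unfolding mirror_H_def mirror_S_def
    by (auto intro!: pi_in S_in[of h "- p", simplified] simp: gsimps)
  have Sin: "S (- p) x \<in> H p" if "x \<in> H (- p)" for x using S_in[OF that] by simp
  show "lin_on scale (mirror_H H p) (mirror_S pi S p)"
    using S_lin[of "- p"] unfolding lin_on_def mirror_H_def mirror_S_def
    by (auto simp: pi_add pi_scale Sin)
qed


lemma S_in': "h \<in> H (- p) \<Longrightarrow> S (- p) h \<in> H p"
  using S_in[of h "- p"] by simp

lemma M_S12: "\<forall>p. \<forall>h\<in>mirror_H H p.
        mirror_S pi S p h = sum_list (map (\<lambda>(a,b). mirror_mu mu (- p) (mirror_S pi S p a) (epst scale (mirror_mu mu) (mirror_one one) (mirror_Delta pi Delta) eps (- p) b)) (mirror_Delta pi Delta p 0 h)) \<and>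
        mirror_S pi S p h = sum_list (map (\<lambda>(a,b). mirror_mu mu (- p) (epss scale (mirror_mu mu) (mirror_one one) (mirror_Delta pi Delta) eps (- p) a) (mirror_S pi S p b)) (mirror_Delta pi Delta 0 p h))"
proof (intro allI ballI conjI)
  fix p h assume h0: "h \<in> mirror_H H p"
  have h: "h \<in> H (- p)" using h0 unfolding mirror_H_def .
  have ep: "p = p + p - p" by (simp add: gsimps)
  have hh: "h \<in> H (- p + 0)" using h by simp
  have sD: "set (Delta (- p) 0 h) \<subseteq> H (- p) \<times> H 0" using D_set[OF hh] .
  have D1: "mirror_Delta pi Delta p 0 h = Delta (- p) 0 h"
    unfolding mirror_Delta_def using sD by (auto simp: pi0 intro!: map_idI)
  have "sum_list (map (\<lambda>(a,b). mirror_mu mu (- p) (mirror_S pi S p a) (epst scale (mirror_mu mu) (mirror_one one) (mirror_Delta pi Delta) eps (- p) b)) (mirror_Delta pi Delta p 0 h))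
     = sum_list (map (\<lambda>(a,b). pi p p (mu p (S (- p) a) (epst scale mu one Delta eps p b))) (Delta (- p) 0 h))"
    unfolding D1 using sD
    by (auto simp: mirror_mu_def mirror_S_def tepst pi_mu[OF S_in' epst_in ep] intro!: arg_cong[where f=sum_list] map_cong)
  also have "\<dots> = pi p p (sum_list (map (\<lambda>(a,b). mu p (S (- p) a) (epst scale mu one Delta eps p b)) (Delta (- p) 0 h)))"
    using sD by (subst pi_sum) (auto simp: split_def subset_iff intro!: mu_in S_in' epst_in)
  also have "\<dots> = mirror_S pi S p h"
    unfolding mirror_S_def using S1[OF h] by simp
  finally show "mirror_S pi S p h = sum_list (map (\<lambda>(a,b). mirror_mu mu (- p) (mirror_S pi S p a) (epst scale (mirror_mu mu) (mirror_one one) (mirror_Delta pi Delta) eps (- p) b)) (mirror_Delta pi Delta p 0 h))" ..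
  have hh2: "h \<in> H (0 + - p)" using h by simp
  have sD2: "set (Delta 0 (- p) h) \<subseteq> H 0 \<times> H (- p)" using D_set[OF hh2] .
  have D2: "mirror_Delta pi Delta 0 p h = map (\<lambda>(a,b). (pi p 0 a, b)) (Delta 0 (- p) h)"
    unfolding mirror_Delta_def by simp
  have pe: "pi p p (epss scale mu one Delta eps p a) = epss scale mu one Delta eps p (pi p 0 a)" if "a \<in> H 0" for a
    by (rule pi_epss[OF that ep])
  have "sum_list (map (\<lambda>(a,b). mirror_mu mu (- p) (epss scale (mirror_mu mu) (mirror_one one) (mirror_Delta pi Delta) eps (- p) a) (mirror_S pi S p b)) (mirror_Delta pi Delta 0 p h))
     = sum_list (map (\<lambda>(a,b). pi p p (mu p (epss scale mu one Delta eps p a) (S (- p) b))) (Delta 0 (- p) h))"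
    unfolding D2 using sD2
    by (auto simp: mirror_mu_def mirror_S_def tepss pi_in pe[symmetric] pi_mu[OF epss_in S_in' ep]
       intro!: arg_cong[where f=sum_list] map_cong)
  also have "\<dots> = pi p p (sum_list (map (\<lambda>(a,b). mu p (epss scale mu one Delta eps p a) (S (- p) b)) (Delta 0 (- p) h)))"
    using sD2 by (subst pi_sum) (auto simp: split_def subset_iff intro!: mu_in S_in' epss_in)
  also have "\<dots> = mirror_S pi S p h"
    unfolding mirror_S_def using S2[OF h] by simp
  finally show "mirror_S pi S p h = sum_list (map (\<lambda>(a,b). mirror_mu mu (- p) (epss scale (mirror_mu mu) (mirror_one one) (mirror_Delta pi Delta) eps (- p) a) (mirror_S pi S p b)) (mirror_Delta pi Delta 0 p h))" ..
qed


lemma S_add: "x \<in> H p \<Longrightarrow> y \<in> H p \<Longrightarrow> S p (x + y) = S p x + S p y"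
  using S_lin[of p] unfolding lin_on_def by blast
lemma S_scale: "x \<in> H p \<Longrightarrow> S p (scale c x) = scale c (S p x)"
  using S_lin[of p] unfolding lin_on_def by blast
lemma S_in'': "x \<in> H p \<Longrightarrow> S p x \<in> H (- p)"
  by (rule S_in)

lemma DmP: "mirror_Delta pi Delta (- p) p h = map (\<lambda>(a,b). (pi p p a, b)) (Delta p (- p) h)"
  unfolding mirror_Delta_def by simp
lemma DPm: "mirror_Delta pi Delta p (- p) h = map (\<lambda>(a,b). (pi (- p) (- p) a, b)) (Delta (- p) p h)"
  unfolding mirror_Delta_def by simp

lemma Qa:
  assumes h: "h \<in> H 0" and g: "g \<in> H (- p)"
  shows "sum_list (map (\<lambda>(a,b). mu (- p) a (mu (- p) (pi (- p) (- p) (S p b)) g)) (map (\<lambda>(a,b). (pi (- p) (- p) a, b)) (Delta (- p) p h)))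
     = mu (- p) (pi (- p) (- p) (epst scale mu one Delta eps (- p) h)) g"
    "sum_list (map (\<lambda>(a,b). mu (- p) (mu (- p) g a) (pi (- p) (- p) (S p b))) (map (\<lambda>(a,b). (pi (- p) (- p) a, b)) (Delta (- p) p h)))
     = mu (- p) g (pi (- p) (- p) (epst scale mu one Delta eps (- p) h))"
proof -
  define g' where "g' = pi p (- p) g"
  have em: "- p = - p + - p - - p" and em2: "- p = p + - p - p" by (simp_all add: gsimps)
  have g': "g' \<in> H (- p)" unfolding g'_def by (rule pi_in[OF g em2])
  have gg: "pi (- p) (- p) g' = g" unfolding g'_def by (rule pi_inv2[OF g em2])
  have hh: "h \<in> H (- p + p)" using h by simp
  have sD: "set (Delta (- p) p h) \<subseteq> H (- p) \<times> H p" using D_set[OF hh] .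
  have et: "epst scale mu one Delta eps (- p) h \<in> H (- p)" by (rule epst_in[OF h])
  have "sum_list (map (\<lambda>(a,b). mu (- p) a (mu (- p) (pi (- p) (- p) (S p b)) g)) (map (\<lambda>(a,b). (pi (- p) (- p) a, b)) (Delta (- p) p h)))
     = sum_list (map (\<lambda>(a,b). pi (- p) (- p) (mu (- p) a (mu (- p) (S p b) g'))) (Delta (- p) p h))"
    using sD by (auto simp: pi_mu[OF _ _ em] mu_in S_in'' g' gg[symmetric] intro!: arg_cong[where f=sum_list] map_cong)
  also have "\<dots> = pi (- p) (- p) (sum_list (map (\<lambda>(a,b). mu (- p) a (mu (- p) (S p b) g')) (Delta (- p) p h)))"
    using sD by (subst pi_sum) (auto simp: split_def subset_iff intro!: mu_in S_in'' g')
  also have "\<dots> = pi (- p) (- p) (mu (- p) (epst scale mu one Delta eps (- p) h) g')"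
    using Q2[OF h g'] by simp
  also have "\<dots> = mu (- p) (pi (- p) (- p) (epst scale mu one Delta eps (- p) h)) g"
    using pi_mu[OF et g' em] gg by simp
  finally show "sum_list (map (\<lambda>(a,b). mu (- p) a (mu (- p) (pi (- p) (- p) (S p b)) g)) (map (\<lambda>(a,b). (pi (- p) (- p) a, b)) (Delta (- p) p h)))
     = mu (- p) (pi (- p) (- p) (epst scale mu one Delta eps (- p) h)) g" .
  have "sum_list (map (\<lambda>(a,b). mu (- p) (mu (- p) g a) (pi (- p) (- p) (S p b))) (map (\<lambda>(a,b). (pi (- p) (- p) a, b)) (Delta (- p) p h)))
     = sum_list (map (\<lambda>(a,b). pi (- p) (- p) (mu (- p) (mu (- p) g' a) (S p b))) (Delta (- p) p h))"
    using sD by (auto simp: pi_mu[OF _ _ em] mu_in S_in'' g' gg[symmetric] intro!: arg_cong[where f=sum_list] map_cong)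
  also have "\<dots> = pi (- p) (- p) (sum_list (map (\<lambda>(a,b). mu (- p) (mu (- p) g' a) (S p b)) (Delta (- p) p h)))"
    using sD by (subst pi_sum) (auto simp: split_def subset_iff intro!: mu_in S_in'' g')
  also have "\<dots> = pi (- p) (- p) (mu (- p) g' (epst scale mu one Delta eps (- p) h))"
    using Q3[OF h g'] by simp
  also have "\<dots> = mu (- p) g (pi (- p) (- p) (epst scale mu one Delta eps (- p) h))"
    using pi_mu[OF g' et em] gg by simp
  finally show "sum_list (map (\<lambda>(a,b). mu (- p) (mu (- p) g a) (pi (- p) (- p) (S p b))) (map (\<lambda>(a,b). (pi (- p) (- p) a, b)) (Delta (- p) p h)))
     = mu (- p) g (pi (- p) (- p) (epst scale mu one Delta eps (- p) h))" .
qed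


lemma Qb:
  assumes h: "h \<in> H 0" and g: "g \<in> H (- p)"
  shows "sum_list (map (\<lambda>(a,b). mu (- p) (pi (- p) (- p) (S p a)) (mu (- p) b g)) (map (\<lambda>(a,b). (pi p p a, b)) (Delta p (- p) h)))
     = mu (- p) (epss scale mu one Delta eps (- p) h) g"
    "sum_list (map (\<lambda>(a,b). mu (- p) (mu (- p) g (pi (- p) (- p) (S p a))) b) (map (\<lambda>(a,b). (pi p p a, b)) (Delta p (- p) h)))
     = mu (- p) g (epss scale mu one Delta eps (- p) h)"
proof -
  define G where "G = pi p (- p) g"
  have em: "- p = - p + - p - - p" and em2: "- p = p + - p - p" and ep: "p = p + p - p" and e0: "0 = p + - p"
    by (simp_all add: gsimps)
  have G: "G \<in> H (- p)" unfolding G_def by (rule pi_in[OF g em2])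
  have hh: "h \<in> H (p + - p)" using h by simp
  have sD: "set (Delta p (- p) h) \<subseteq> H p \<times> H (- p)" using D_set[OF hh] .
  have ph: "pi p 0 h \<in> H 0" by (rule pi_in[OF h]) (simp add: gsimps)
  have es: "epss scale mu one Delta eps (- p) h \<in> H (- p)" by (rule epss_in[OF h])
  have pp: "a \<in> H p \<Longrightarrow> pi p p a \<in> H p" for a by (rule pi_in[OF _ ep])
  have pm: "b \<in> H (- p) \<Longrightarrow> pi p (- p) b \<in> H (- p)" for b by (rule pi_in[OF _ em2])
  have pmm: "b \<in> H (- p) \<Longrightarrow> pi (- p) (- p) b \<in> H (- p)" for b by (rule pi_in[OF _ em])
  have inv: "y \<in> H (- p) \<Longrightarrow> pi p (- p) (pi (- p) (- p) y) = y" for y by (rule pi_inv[OF _ em])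
  have tq: "teq2 scale (H p) (H (- p)) (map (\<lambda>(x,y). (pi p p x, pi p (- p) y)) (Delta p (- p) h)) (Delta p (- p) (pi p 0 h))"
    by (rule pi_D[OF h e0 ep em2])
  let ?L1 = "sum_list (map (\<lambda>(a,b). mu (- p) (pi (- p) (- p) (S p a)) (mu (- p) b g)) (map (\<lambda>(a,b). (pi p p a, b)) (Delta p (- p) h)))"
  have L1: "?L1 = sum_list (map (\<lambda>(a,b). mu (- p) (pi (- p) (- p) (S p (pi p p a))) (mu (- p) b g)) (Delta p (- p) h))"
    by (simp add: comp_def split_def)
  have L1in: "?L1 \<in> H (- p)" unfolding L1 using sD
    by (intro sum_in) (auto simp: split_def subset_iff intro!: mu_in pmm S_in'' pp g)
  have F1: "blinv scale (H p) (H (- p)) (\<lambda>x y. mu (- p) (S p x) (mu (- p) y G))"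
    unfolding blinv_def lin_on_def using G
    by (auto simp: S_add S_scale mu_add_l mu_add_r mu_scale_l mu_scale_r S_in'' mu_in add_in scale_in)
  have "pi p (- p) ?L1 = sum_list (map (\<lambda>(a,b). pi p (- p) (mu (- p) (pi (- p) (- p) (S p (pi p p a))) (mu (- p) b g))) (Delta p (- p) h))"
    unfolding L1 using sD by (subst pi_sum) (auto simp: split_def subset_iff intro!: mu_in pmm S_in'' pp g)
  also have "\<dots> = sum_list (map (\<lambda>(a,b). mu (- p) (S p a) (mu (- p) b G)) (map (\<lambda>(x,y). (pi p p x, pi p (- p) y)) (Delta p (- p) h)))"
    using sD unfolding G_def
    by (auto simp: pi_mu[OF _ _ em2] mu_in pmm S_in'' pp g inv intro!: arg_cong[where f=sum_list] map_cong)
  also have "\<dots> = sum_list (map (\<lambda>(a,b). mu (- p) (S p a) (mu (- p) b G)) (Delta p (- p) (pi p 0 h)))"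
    by (rule teq2_vec[OF vs tq F1])
  also have "\<dots> = mu (- p) (epss scale mu one Delta eps (- p) (pi p 0 h)) G"
    using Q1[OF ph G] by simp
  also have "\<dots> = pi p (- p) (mu (- p) (epss scale mu one Delta eps (- p) h) g)"
    unfolding G_def using pi_mu[OF es g em2] pi_epss[OF h em2] by simp
  finally show "?L1 = mu (- p) (epss scale mu one Delta eps (- p) h) g"
    using pi_inj[OF L1in mu_in[OF es g]] by blast
  let ?L4 = "sum_list (map (\<lambda>(a,b). mu (- p) (mu (- p) g (pi (- p) (- p) (S p a))) b) (map (\<lambda>(a,b). (pi p p a, b)) (Delta p (- p) h)))"
  have L4: "?L4 = sum_list (map (\<lambda>(a,b). mu (- p) (mu (- p) g (pi (- p) (- p) (S p (pi p p a)))) b) (Delta p (- p) h))"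
    by (simp add: comp_def split_def)
  have L4in: "?L4 \<in> H (- p)" unfolding L4 using sD
    by (intro sum_in) (auto simp: split_def subset_iff intro!: mu_in pmm S_in'' pp g)
  have F4: "blinv scale (H p) (H (- p)) (\<lambda>x y. mu (- p) (mu (- p) G (S p x)) y)"
    unfolding blinv_def lin_on_def using G
    by (auto simp: S_add S_scale mu_add_l mu_add_r mu_scale_l mu_scale_r S_in'' mu_in add_in scale_in)
  have "pi p (- p) ?L4 = sum_list (map (\<lambda>(a,b). pi p (- p) (mu (- p) (mu (- p) g (pi (- p) (- p) (S p (pi p p a)))) b)) (Delta p (- p) h))"
    unfolding L4 using sD by (subst pi_sum) (auto simp: split_def subset_iff intro!: mu_in pmm S_in'' pp g)
  also have "\<dots> = sum_list (map (\<lambda>(a,b). mu (- p) (mu (- p) G (S p a)) b) (map (\<lambda>(x,y). (pi p p x, pi p (- p) y)) (Delta p (- p) h)))"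
    using sD unfolding G_def
    by (auto simp: pi_mu[OF _ _ em2] mu_in pmm S_in'' pp g inv intro!: arg_cong[where f=sum_list] map_cong)
  also have "\<dots> = sum_list (map (\<lambda>(a,b). mu (- p) (mu (- p) G (S p a)) b) (Delta p (- p) (pi p 0 h)))"
    by (rule teq2_vec[OF vs tq F4])
  also have "\<dots> = mu (- p) G (epss scale mu one Delta eps (- p) (pi p 0 h))"
    using Q4[OF ph G] by simp
  also have "\<dots> = pi p (- p) (mu (- p) g (epss scale mu one Delta eps (- p) h))"
    unfolding G_def using pi_mu[OF g es em2] pi_epss[OF h em2] by simp
  finally show "?L4 = mu (- p) g (epss scale mu one Delta eps (- p) h)"
    using pi_inj[OF L4in mu_in[OF g es]] by blast
qed


lemma M_Q: "\<forall>p. \<forall>h\<in>mirror_H H 0. \<forall>g\<in>mirror_H H p.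
        sum_list (map (\<lambda>(a,b). mirror_mu mu p (mirror_S pi S (- p) a) (mirror_mu mu p b g)) (mirror_Delta pi Delta (- p) p h))
          = mirror_mu mu p (epss scale (mirror_mu mu) (mirror_one one) (mirror_Delta pi Delta) eps p h) g \<and>
        sum_list (map (\<lambda>(a,b). mirror_mu mu p a (mirror_mu mu p (mirror_S pi S (- p) b) g)) (mirror_Delta pi Delta p (- p) h))
          = mirror_mu mu p (epst scale (mirror_mu mu) (mirror_one one) (mirror_Delta pi Delta) eps p h) g \<and>
        sum_list (map (\<lambda>(a,b). mirror_mu mu p (mirror_mu mu p g a) (mirror_S pi S (- p) b)) (mirror_Delta pi Delta p (- p) h))
          = mirror_mu mu p g (epst scale (mirror_mu mu) (mirror_one one) (mirror_Delta pi Delta) eps p h) \<and>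
        sum_list (map (\<lambda>(a,b). mirror_mu mu p (mirror_mu mu p g (mirror_S pi S (- p) a)) b) (mirror_Delta pi Delta (- p) p h))
          = mirror_mu mu p g (epss scale (mirror_mu mu) (mirror_one one) (mirror_Delta pi Delta) eps p h)"
proof (intro allI ballI)
  fix p h g assume h0: "h \<in> mirror_H H 0" and g0: "g \<in> mirror_H H p"
  have h: "h \<in> H 0" and g: "g \<in> H (- p)" using h0 g0 unfolding mirror_H_def by simp_all
  have tS: "mirror_S pi S (- p) = (\<lambda>x. pi (- p) (- p) (S p x))"
    unfolding mirror_S_def by simp
  show "sum_list (map (\<lambda>(a,b). mirror_mu mu p (mirror_S pi S (- p) a) (mirror_mu mu p b g)) (mirror_Delta pi Delta (- p) p h))
          = mirror_mu mu p (epss scale (mirror_mu mu) (mirror_one one) (mirror_Delta pi Delta) eps p h) g \<and>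
        sum_list (map (\<lambda>(a,b). mirror_mu mu p a (mirror_mu mu p (mirror_S pi S (- p) b) g)) (mirror_Delta pi Delta p (- p) h))
          = mirror_mu mu p (epst scale (mirror_mu mu) (mirror_one one) (mirror_Delta pi Delta) eps p h) g \<and>
        sum_list (map (\<lambda>(a,b). mirror_mu mu p (mirror_mu mu p g a) (mirror_S pi S (- p) b)) (mirror_Delta pi Delta p (- p) h))
          = mirror_mu mu p g (epst scale (mirror_mu mu) (mirror_one one) (mirror_Delta pi Delta) eps p h) \<and>
        sum_list (map (\<lambda>(a,b). mirror_mu mu p (mirror_mu mu p g (mirror_S pi S (- p) a)) b) (mirror_Delta pi Delta (- p) p h))
          = mirror_mu mu p g (epss scale (mirror_mu mu) (mirror_one one) (mirror_Delta pi Delta) eps p h)"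
    unfolding tS DmP DPm tepst[OF h] tepss[OF h] mirror_mu_def
    using Qa[OF h g] Qb[OF h g] by simp
qed

lemma M_pi1: "\<forall>p q. bij_betw (mirror_pi pi p q) (mirror_H H q) (mirror_H H (p + q - p)) \<and>
            lin_on scale (mirror_H H q) (mirror_pi pi p q) \<and>
            (\<forall>x\<in>mirror_H H q. \<forall>y\<in>mirror_H H q. mirror_pi pi p q (mirror_mu mu q x y) = mirror_mu mu (p + q - p) (mirror_pi pi p q x) (mirror_pi pi p q y)) \<and>
            mirror_pi pi p q (mirror_one one q) = mirror_one one (p + q - p)"
proof (intro allI)
  fix p q :: 'g
  have e: "- (p + q - p) = p + - q - p" by (simp add: gsimps)
  show "bij_betw (mirror_pi pi p q) (mirror_H H q) (mirror_H H (p + q - p)) \<and>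
            lin_on scale (mirror_H H q) (mirror_pi pi p q) \<and>
            (\<forall>x\<in>mirror_H H q. \<forall>y\<in>mirror_H H q. mirror_pi pi p q (mirror_mu mu q x y) = mirror_mu mu (p + q - p) (mirror_pi pi p q x) (mirror_pi pi p q y)) \<and>
            mirror_pi pi p q (mirror_one one q) = mirror_one one (p + q - p)"
    unfolding mirror_pi_def mirror_H_def mirror_mu_def mirror_one_def e
    using pi_bij0[of p "- q"] pi_lin[of "- q" p] pi_mu0[of _ "- q" _ p] pi_one0[of p "- q"] by blast
qed

lemma M_piD: "\<forall>p q r. \<forall>h\<in>mirror_H H (q + r).
        teq2 scale (mirror_H H (p + q - p)) (mirror_H H (p + r - p))
          (map (\<lambda>(a,b). (mirror_pi pi p q a, mirror_pi pi p r b)) (mirror_Delta pi Delta q r h))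
          (mirror_Delta pi Delta (p + q - p) (p + r - p) (mirror_pi pi p (q + r) h))"
proof (intro allI ballI)
  fix p q r h assume h0: "h \<in> mirror_H H (q + r)"
  let ?d = "- r + - q + r" and ?q' = "p + q - p" and ?r' = "p + r - p"
  let ?d' = "- ?r' + - ?q' + ?r'"
  have h: "h \<in> H (- (q + r))" using h0 unfolding mirror_H_def .
  have hh: "h \<in> H (?d + - r)" using h by (simp add: gsimps)
  have sD: "set (Delta ?d (- r) h) \<subseteq> H ?d \<times> H (- r)" using D_set[OF hh] .
  have t: "teq2 scale (H ?d') (H (- ?r')) (map (\<lambda>(x,y). (pi p ?d x, pi p (- r) y)) (Delta ?d (- r) h))
     (Delta ?d' (- ?r') (pi p (- (q + r)) h))"
    by (rule pi_D[OF h]) (simp_all add: gsimps)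
  from teq2_pi1[OF t, of "- ?q'" ?r']
  have t2: "teq2 scale (H (- ?q')) (H (- ?r')) (map (\<lambda>(x,y). (pi ?r' ?d' (pi p ?d x), pi p (- r) y)) (Delta ?d (- r) h))
     (mirror_Delta pi Delta ?q' ?r' (pi p (- (q + r)) h))"
    unfolding mirror_Delta_def by (simp add: comp_def split_def gsimps)
  have "map (\<lambda>(x,y). (pi ?r' ?d' (pi p ?d x), pi p (- r) y)) (Delta ?d (- r) h) =
        map (\<lambda>(a,b). (mirror_pi pi p q a, mirror_pi pi p r b)) (mirror_Delta pi Delta q r h)"
  proof -
    have "pi ?r' ?d' (pi p ?d x) = pi p (- q) (pi r ?d x)" if "x \<in> H ?d" for x
    proof -
      have "pi ?r' ?d' (pi p ?d x) = pi (p + r) ?d x"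
        by (rule pi_comp'[OF that]) (simp_all add: gsimps)
      also have "\<dots> = pi p (- q) (pi r ?d x)"
        by (rule pi_comp'[OF that, symmetric]) (simp_all add: gsimps)
      finally show ?thesis .
    qed
    then show ?thesis unfolding mirror_Delta_def mirror_pi_def using sD
      by (auto simp: comp_def split_def intro!: map_cong)
  qed
  with t2 show "teq2 scale (mirror_H H (p + q - p)) (mirror_H H (p + r - p))
          (map (\<lambda>(a,b). (mirror_pi pi p q a, mirror_pi pi p r b)) (mirror_Delta pi Delta q r h))
          (mirror_Delta pi Delta (p + q - p) (p + r - p) (mirror_pi pi p (q + r) h))"
    unfolding mirror_H_def mirror_pi_def by simp
qed

lemma M_epspi: "\<forall>p. \<forall>h\<in>mirror_H H 0. eps (mirror_pi pi p 0 h) = eps h"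
  unfolding mirror_H_def mirror_pi_def using eps_pi by simp

lemma M_picomp: "\<forall>p q r. \<forall>h\<in>mirror_H H r. mirror_pi pi (p + q) r h = mirror_pi pi p (q + r - q) (mirror_pi pi q r h)"
proof (intro allI ballI)
  fix p q r h assume "h \<in> mirror_H H r"
  then have h: "h \<in> H (- r)" unfolding mirror_H_def .
  show "mirror_pi pi (p + q) r h = mirror_pi pi p (q + r - q) (mirror_pi pi q r h)"
    unfolding mirror_pi_def by (rule pi_comp'[OF h, symmetric]) (simp_all add: gsimps)
qed

end

theorem proposition3p3:
  fixes scale :: "'k::field \<Rightarrow> 'h::ab_group_add \<Rightarrow> 'h"
    and H :: "'g::group_add \<Rightarrow> 'h set"
    and mu :: "'g \<Rightarrow> 'h \<Rightarrow> 'h \<Rightarrow> 'h"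
    and one :: "'g \<Rightarrow> 'h"
    and Delta :: "'g \<Rightarrow> 'g \<Rightarrow> 'h \<Rightarrow> ('h \<times> 'h) list"
    and eps :: "'h \<Rightarrow> 'k"
    and S :: "'g \<Rightarrow> 'h \<Rightarrow> 'h"
    and pi :: "'g \<Rightarrow> 'g \<Rightarrow> 'h \<Rightarrow> 'h"
  assumes "crossed_gc_whq scale H mu one Delta eps S pi"
  shows "crossed_gc_whq scale (mirror_H H) (mirror_mu mu) (mirror_one one)
           (mirror_Delta pi Delta) eps (mirror_S pi S) (mirror_pi pi)"
proof -
  interpret CG scale H mu one Delta eps S pi by (rule CG.intro[OF assms])
  show ?thesis unfolding crossed_gc_whq_def gc_whq_def
    by (intro conjI M_alg M_set M_add M_scale M_coassoc M_eps_lin M_counit M_mult M_unit M_eps2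
        M_S0 M_S12 M_Q M_pi1 M_piD M_epspi M_picomp)
qed

end
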